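(* Let $\mathcal P$ be a solvable finite-dimensional Poisson $n$-Lie algebra of dimension $m$ over an algebraically closed field of characteristic zero. Then there is a chain of ideals $0=\mathcal P_0\subset\mathcal P_1\subset\cdots\subset\mathcal P_m=\mathcal P$ with $\dim\mathcal P_i=i$ for all $i$.
   Context: A Poisson $n$-Lie algebra is a commutative associative algebra $(\mathcal P,\cdot)$ with an $n$-linear skew-symmetric bracket satisfying the fundamental identity $[x_1,\dots,x_{n-1},[y_1,\dots,y_n]]=\sum_{i=1}^n[y_1,\dots,[x_1,\dots,x_{n-1},y_i],\dots,y_n]$ and the Leibniz rule $[y\cdot z,x_2,\dots,x_n]=y\cdot[z,x_2,\dots,x_n]+z\cdot[y,x_2,\dots,x_n]$. An ideal is a subspace $\mathcal I$ with $\mathcal P\cdot\mathcal I\subseteq\mathcal I$ and $[\mathcal I,\mathcal P,\dots,\mathcal P]\subseteq\mathcal I$. $\mathcal P$ is solvable if $\mathcal P^{(s)}=0$ for some $s$, where $\mathcal P^{(1)}=\mathcal P$, $\mathcal P^{(k+1)}=[\mathcal P^{(k)},\mathcal P^{(k)},\mathcal P,\dots,\mathcal P]+\mathcal P^{(k)}\cdot\mathcal P^{(k)}$ (linear spans). *)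

theory Defs
  imports Main "HOL-Computational_Algebra.Polynomial"
begin

definition alg_closed :: "'k::field itself \<Rightarrow> bool" where
  "alg_closed _ \<longleftrightarrow> (\<forall>p :: 'k poly. degree p \<ge> 1 \<longrightarrow> (\<exists>x. poly p x = 0))"

text \<open>A Poisson n-Lie algebra structure on the commutative associative (not necessarily unital)
  algebra 'v (ring operations from the class comm_ring) over the field 'k with scalar
  multiplication scale.  The n-ary bracket is a function on lists of length n.\<close>
definition poisson_nlie ::
  "('k::field \<Rightarrow> 'v::comm_ring \<Rightarrow> 'v) \<Rightarrow> nat \<Rightarrow> ('v list \<Rightarrow> 'v) \<Rightarrow> bool" where
  "poisson_nlie scale n br \<longleftrightarrow>
     vector_space scale \<and>
     (\<forall>a x y. scale a (x * y) = scale a x * y) \<and>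
     n \<ge> 2 \<and>
     (\<forall>xs i. length xs = n \<longrightarrow> i < n \<longrightarrow>
        Vector_Spaces.linear scale scale (\<lambda>x. br (xs[i := x]))) \<and>
     (\<forall>xs i j. length xs = n \<longrightarrow> i < n \<longrightarrow> j < n \<longrightarrow> i \<noteq> j \<longrightarrow>
        br (xs[i := xs ! j, j := xs ! i]) = - br xs) \<and>
     (\<forall>xs ys. length xs = n - 1 \<longrightarrow> length ys = n \<longrightarrow>
        br (xs @ [br ys]) = (\<Sum>i<n. br (ys[i := br (xs @ [ys ! i])]))) \<and>
     (\<forall>y z xs. length xs = n - 1 \<longrightarrow>
        br ((y * z) # xs) = y * br (z # xs) + z * br (y # xs))"

definition pn_ideal ::
  "('k::field \<Rightarrow> 'v::comm_ring \<Rightarrow> 'v) \<Rightarrow> nat \<Rightarrow> ('v list \<Rightarrow> 'v) \<Rightarrow> 'v set \<Rightarrow> bool" where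
  "pn_ideal scale n br I \<longleftrightarrow>
     module.subspace scale I \<and>
     (\<forall>p x. x \<in> I \<longrightarrow> p * x \<in> I) \<and>
     (\<forall>x xs. x \<in> I \<longrightarrow> length xs = n - 1 \<longrightarrow> br (x # xs) \<in> I)"

text \<open>Derived series: derived 0 = P (the paper's P^(1)), and
  derived (k+1) = span([D,D,P,...,P] \<union> D\<cdot>D).\<close>
primrec derived ::
  "('k::field \<Rightarrow> 'v::comm_ring \<Rightarrow> 'v) \<Rightarrow> nat \<Rightarrow> ('v list \<Rightarrow> 'v) \<Rightarrow> nat \<Rightarrow> 'v set" where
  "derived scale n br 0 = UNIV"
| "derived scale n br (Suc k) =
     module.span scale
       ({br (a # b # zs) | a b zs. a \<in> derived scale n br k \<and> b \<in> derived scale n br k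
                                  \<and> length zs = n - 2}
        \<union> {a * b | a b. a \<in> derived scale n br k \<and> b \<in> derived scale n br k})"

definition pn_solvable ::
  "('k::field \<Rightarrow> 'v::comm_ring \<Rightarrow> 'v) \<Rightarrow> nat \<Rightarrow> ('v list \<Rightarrow> 'v) \<Rightarrow> bool" where
  "pn_solvable scale n br \<longleftrightarrow> (\<exists>s. derived scale n br s = {0})"

end

theory Submission
  imports Defs
begin


locale LT = finite_dimensional_vector_space scale Basis
  for scale :: "'k::field_char_0 \<Rightarrow> 'v::ab_group_add \<Rightarrow> 'v" (infixr "*s" 75) and Basis +
  assumes ac: "alg_closed TYPE('k)"
begin

abbreviation lin where "lin T \<equiv> Vector_Spaces.linear scale scale T"

lemma vs: "vector_space scale" by unfold_locales

lemma lin_add: "lin T \<Longrightarrow> T (a + b) = T a + T b" by (simp add: Vector_Spaces.linear_iff)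
lemma lin_scale: "lin T \<Longrightarrow> T (c *s a) = c *s T a" by (simp add: Vector_Spaces.linear_iff)
lemma lin_0: "lin T \<Longrightarrow> T 0 = 0" using lin_scale[of T 0 0] by simp
lemma lin_neg: "lin T \<Longrightarrow> T (- a) = - T a" using lin_scale[of T "-1" a] by (simp add: scale_minus_left)
lemma lin_diff: "lin T \<Longrightarrow> T (a - b) = T a - T b" using lin_add[of T a "-b"] lin_neg[of T b] by simp
lemma lin_sum: "lin T \<Longrightarrow> T (\<Sum>i\<in>I. f i) = (\<Sum>i\<in>I. T (f i))"
  by (induction I rule: infinite_finite_induct) (auto simp: lin_add lin_0)
lemma linI: "(\<And>a b. T (a + b) = T a + T b) \<Longrightarrow> (\<And>c a. T (c *s a) = c *s T a) \<Longrightarrow> lin T"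
  by (simp add: Vector_Spaces.linear_iff vs)

lemma lin_span_into:
  assumes "lin s" "\<And>g. g \<in> G \<Longrightarrow> s g \<in> span H" "v \<in> span G"
  shows "s v \<in> span H"
  using assms(3)
proof (induction rule: span_induct_alt)
  case base then show ?case using lin_0[OF assms(1)] by (simp add: span_zero)
next
  case (step c x y) then show ?case
    using assms by (simp add: lin_add lin_scale span_add span_scale)
qed

lemma lin_sub_into:
  assumes "lin s" "subspace A" "\<And>g. g \<in> G \<Longrightarrow> s g \<in> A" "v \<in> span G"
  shows "s v \<in> A"
proof -
  have "s v \<in> span A" using lin_span_into[OF assms(1) _ assms(4), of A] assms(3) span_base by blast
  then show ?thesis using assms(2) span_eq_iff by metis
qed

lemma funpow_in: "(\<And>e. e \<in> E \<Longrightarrow> T e \<in> E) \<Longrightarrow> w \<in> E \<Longrightarrow> (T^^i) w \<in> E"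
  by (induction i) auto

lemma lin_funpow: "lin T \<Longrightarrow> lin (T^^i)"
  by (induction i) (auto intro!: linI simp: lin_add lin_scale)

section \<open>Polynomial evaluation\<close>

definition peval :: "'k poly \<Rightarrow> ('v \<Rightarrow> 'v) \<Rightarrow> 'v \<Rightarrow> 'v" where
  "peval p T w = (\<Sum>i<Suc (degree p). coeff p i *s (T^^i) w)"

lemma peval_alt: assumes "degree p < N" shows "peval p T w = (\<Sum>i<N. coeff p i *s (T^^i) w)"
proof -
  have "(\<Sum>i<N. coeff p i *s (T^^i) w) = (\<Sum>i<Suc (degree p). coeff p i *s (T^^i) w)"
    by (rule sum.mono_neutral_right) (use assms in \<open>auto simp: coeff_eq_0\<close>)
  then show ?thesis by (simp add: peval_def)
qed

lemma peval_add: "peval (p + q) T w = peval p T w + peval q T w"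
proof -
  define N where "N = Suc (max (degree p) (degree q))"
  have "degree (p + q) < N" using degree_add_le_max[of p q] unfolding N_def by linarith
  moreover have "degree p < N" "degree q < N" unfolding N_def by auto
  ultimately show ?thesis
    by (simp add: peval_alt[of _ N] scale_left_distrib sum.distrib)
qed

lemma peval_smult: "peval (smult c p) T w = c *s peval p T w"
proof -
  have "degree (smult c p) < Suc (degree p)" using degree_smult_le[of c p] by linarith
  then show ?thesis
    by (simp add: peval_alt[of _ "Suc (degree p)"] peval_def scale_sum_right scale_right_distrib scale_scale)
qed

lemma peval_monom: "peval (monom c K) T w = c *s (T^^K) w"
proof -
  have "degree (monom c K) < Suc K" by (simp add: degree_monom_le le_imp_less_Suc)
  then have "peval (monom c K) T w = (\<Sum>i<Suc K. coeff (monom c K) i *s (T^^i) w)"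
    by (rule peval_alt)
  also have "\<dots> = (\<Sum>i<Suc K. if i = K then c *s (T^^K) w else 0)"
    by (rule sum.cong) (auto simp: coeff_monom)
  finally show ?thesis by simp
qed

lemma peval_0[simp]: "peval 0 T w = 0" by (simp add: peval_def)

lemma peval_const: "peval [:c:] T w = c *s w" by (simp add: peval_def)

lemma peval_pCons0: assumes "lin T" shows "peval (pCons 0 q) T w = T (peval q T w)"
proof -
  have "degree (pCons 0 q) < Suc (Suc (degree q))" by (simp add: le_imp_less_Suc)
  then have "peval (pCons 0 q) T w = (\<Sum>i<Suc (Suc (degree q)). coeff (pCons 0 q) i *s (T^^i) w)"
    by (rule peval_alt)
  also have "\<dots> = (\<Sum>i<Suc (degree q). coeff q i *s (T^^Suc i) w)"
    by (subst sum.lessThan_Suc_shift) simp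
  also have "\<dots> = T (peval q T w)"
    by (simp add: peval_def lin_sum[OF assms] lin_scale[OF assms] lin_add[OF assms])
  finally show ?thesis .
qed

lemma peval_factor: assumes "lin T"
  shows "peval ([:-r,1:] * q) T w = T (peval q T w) - r *s peval q T w"
proof -
  have e: "[:-r,1:] * q = smult (-r) q + pCons 0 q" by simp
  show ?thesis
    unfolding e peval_add peval_smult peval_pCons0[OF assms] by (simp add: scale_minus_left)
qed

lemma peval_in: "subspace E \<Longrightarrow> w \<in> E \<Longrightarrow> (\<And>e. e \<in> E \<Longrightarrow> T e \<in> E) \<Longrightarrow> peval p T w \<in> E"
  unfolding peval_def by (intro subspace_sum subspace_scale) (auto intro: funpow_in)


section \<open>Flags\<close>

definition flag :: "'v set \<Rightarrow> ('v \<Rightarrow> 'v) \<Rightarrow> 'v \<Rightarrow> nat \<Rightarrow> 'v set" where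
  "flag U x w i = span (U \<union> {(x^^l) w | l. l < i})"

lemma flag_0: "subspace U \<Longrightarrow> flag U x w 0 = U"
  by (simp add: flag_def)

lemma flag_Suc: "flag U x w (Suc i) = span (insert ((x^^i) w) (U \<union> {(x^^l) w | l. l < i}))"
proof -
  have "U \<union> {(x^^l) w | l. l < Suc i} = insert ((x^^i) w) (U \<union> {(x^^l) w | l. l < i})"
    by (auto simp: less_Suc_eq)
  then show ?thesis by (simp add: flag_def)
qed

lemma flag_subspace: "subspace (flag U x w i)" by (simp add: flag_def)
lemma flag_U: "U \<subseteq> flag U x w i" unfolding flag_def using span_superset by blast
lemma flag_mem: "l < i \<Longrightarrow> (x^^l) w \<in> flag U x w i" unfolding flag_def by (rule span_base) blast
lemma flag_mono: "i \<le> j \<Longrightarrow> flag U x w i \<subseteq> flag U x w j"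
  unfolding flag_def by (rule span_mono) auto

lemma flag_in: assumes "subspace E" "U \<subseteq> E" "w \<in> E" "\<And>e. e \<in> E \<Longrightarrow> x e \<in> E"
  shows "flag U x w i \<subseteq> E"
  unfolding flag_def using assms funpow_in[of E x w] by (intro span_minimal) auto

lemma flag_stab: "\<exists>K. (x^^K) w \<in> flag U x w K"
proof (rule ccontr)
  assume "\<not> ?thesis"
  then have ni: "(x^^K) w \<notin> flag U x w K" for K by blast
  have "dim (flag U x w K) \<ge> K" for K
  proof (induction K)
    case (Suc K)
    have "dim (flag U x w (Suc K)) = dim (insert ((x^^K) w) (U \<union> {(x^^l) w | l. l < K}))"
      by (simp add: flag_Suc)
    also have "\<dots> = dim (flag U x w K) + 1"
      using ni[of K] by (simp add: dim_insert flag_def)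
    finally show ?case using Suc by simp
  qed simp
  from this[of "Suc dimension"] show False
    using dim_subset_UNIV[of "flag U x w (Suc dimension)"] by simp
qed

lemma flag_inv:
  assumes "lin x" "\<And>u. u \<in> U \<Longrightarrow> x u \<in> U" "(x^^K) w \<in> flag U x w K" "v \<in> flag U x w K"
  shows "x v \<in> flag U x w K"
proof -
  have "x g \<in> flag U x w K" if "g \<in> U \<union> {(x^^l) w | l. l < K}" for g
  proof -
    from that consider "g \<in> U" | l where "l < K" "g = (x^^l) w" by blast
    then show ?thesis
    proof cases
      case 1 then show ?thesis using assms(2) flag_U by blast
    next
      case 2
      then have "x g = (x^^Suc l) w" by simp
      then show ?thesis using assms(3) 2 flag_mem[of "Suc l" K] by (cases "Suc l = K") auto
    qed
  qed
  from lin_span_into[OF assms(1) this[unfolded flag_def] assms(4)[unfolded flag_def]]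
  show ?thesis unfolding flag_def .
qed

lemma flag_step:
  assumes "lin x" "\<And>u. u \<in> U \<Longrightarrow> x u \<in> U" "v \<in> flag U x w i"
  shows "x v \<in> flag U x w (Suc i)"
proof -
  have "x g \<in> flag U x w (Suc i)" if "g \<in> U \<union> {(x^^l) w | l. l < i}" for g
  proof -
    from that consider "g \<in> U" | l where "l < i" "g = (x^^l) w" by blast
    then show ?thesis
    proof cases
      case 1 then show ?thesis using assms(2) flag_U by blast
    next
      case 2
      then have "x g = (x^^Suc l) w" by simp
      then show ?thesis using 2 flag_mem[of "Suc l" "Suc i"] by auto
    qed
  qed
  from lin_span_into[OF assms(1) this[unfolded flag_def] assms(3)[unfolded flag_def]]
  show ?thesis unfolding flag_def .
qed

end

context LT begin

lemma flag_poly: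
  assumes "subspace U"
  shows "v \<in> flag U x w K \<Longrightarrow> \<exists>p. (\<forall>i\<ge>K. coeff p i = 0) \<and> v - peval p x w \<in> U"
proof (induction K arbitrary: v)
  case 0
  then show ?case using flag_0[OF assms] by (intro exI[of _ 0]) auto
next
  case (Suc K)
  have "v \<in> span (insert ((x^^K) w) (U \<union> {(x^^l) w | l. l < K}))" using Suc.prems flag_Suc by simp
  then obtain k where "v - k *s (x^^K) w \<in> span (U \<union> {(x^^l) w | l. l < K})"
    unfolding span_breakdown_eq by blast
  then have k: "v - k *s (x^^K) w \<in> flag U x w K" unfolding flag_def .
  from Suc.IH[OF k] obtain p where p: "\<forall>i\<ge>K. coeff p i = 0" "v - k *s (x^^K) w - peval p x w \<in> U"
    by blast
  have c: "\<forall>i\<ge>Suc K. coeff (p + monom k K) i = 0" using p(1) by (auto simp: coeff_monom)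
  have eq: "v - peval (p + monom k K) x w = v - k *s (x^^K) w - peval p x w"
    by (simp add: peval_add peval_monom algebra_simps)
  have "v - peval (p + monom k K) x w \<in> U" unfolding eq using p(2) .
  with c show ?case by blast
qed

lemma eig_poly:
  assumes U: "subspace U" and E: "subspace E" "U \<subseteq> E" and T: "lin T" "\<And>e. e \<in> E \<Longrightarrow> T e \<in> E"
    and w: "w \<in> E" "w \<notin> U"
  shows "q \<noteq> 0 \<Longrightarrow> peval q T w \<in> U \<Longrightarrow> \<exists>\<mu> e. e \<in> E \<and> e \<notin> U \<and> T e - \<mu> *s e \<in> U"
proof (induction "degree q" arbitrary: q rule: less_induct)
  case less
  show ?case
  proof (cases "degree q = 0")
    case True
    then have c: "q = [:coeff q 0:]" by (metis degree_0_id)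
    have "peval q T w = coeff q 0 *s w" by (metis c peval_const)
    then have "coeff q 0 *s w \<in> U" using less.prems(2) by simp
    moreover have "coeff q 0 \<noteq> 0" using less.prems(1) c by (metis pCons_0_0)
    ultimately have "coeff q 0 \<noteq> 0" "coeff q 0 *s w \<in> U" by auto
    then have "(inverse (coeff q 0)) *s (coeff q 0 *s w) \<in> U" using U subspace_scale by blast
    then have "w \<in> U" using \<open>coeff q 0 \<noteq> 0\<close> by simp
    with w show ?thesis by blast
  next
    case False
    then have "1 \<le> degree q" by simp
    then obtain r where "poly q r = 0" using ac unfolding alg_closed_def by blast
    then have "[:-r,1:] dvd q" by (simp add: poly_eq_0_iff_dvd)
    then obtain q' where q': "q = [:-r,1:] * q'" by (auto elim: dvdE)
    have "q' \<noteq> 0" using less.prems q' by auto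
    have dq: "degree q = Suc (degree q')"
    proof -
      have "degree ([:-r,1:] * q') = degree [:-r,1:] + degree q'"
        by (rule degree_mult_eq) (use \<open>q' \<noteq> 0\<close> in auto)
      then show ?thesis unfolding q' by simp
    qed
    define e where "e = peval q' T w"
    have eE: "e \<in> E" unfolding e_def using peval_in E w T by blast
    show ?thesis
    proof (cases "e \<in> U")
      case True
      then show ?thesis using less.hyps[of q'] dq \<open>q' \<noteq> 0\<close> e_def by auto
    next
      case False
      have "T e - r *s e \<in> U" using less.prems(2) q' peval_factor[OF T(1)] e_def by simp
      then show ?thesis using eE False by blast
    qed
  qed
qed

lemma eigen:
  assumes "subspace U" "subspace E" "U \<subseteq> E" "lin T" "\<And>e. e\<in>E \<Longrightarrow> T e \<in> E" "w \<in> E" "w \<notin> U"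
  shows "\<exists>\<mu> e. e \<in> E \<and> e \<notin> U \<and> T e - \<mu> *s e \<in> U"
proof -
  obtain K where K: "(T^^K) w \<in> flag U T w K" using flag_stab by blast
  obtain p where p: "\<forall>i\<ge>K. coeff p i = 0" "(T^^K) w - peval p T w \<in> U"
    using flag_poly[OF assms(1) K] by blast
  define q where "q = monom 1 K - p"
  have "coeff q K = 1" using p(1) by (simp add: q_def)
  then have "q \<noteq> 0" by auto
  have "monom 1 K = q + p" by (simp add: q_def)
  then have "peval (monom 1 K) T w = peval q T w + peval p T w" by (simp add: peval_add)
  then have "peval q T w \<in> U" using p(2) by (simp add: peval_monom algebra_simps)
  then show ?thesis using eig_poly[OF assms(1-7) \<open>q \<noteq> 0\<close>] by blast
qed

end


definition comm :: "('v::ab_group_add \<Rightarrow> 'v) \<Rightarrow> ('v \<Rightarrow> 'v) \<Rightarrow> 'v \<Rightarrow> 'v" where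
  "comm a b = (\<lambda>v. a (b v) - b (a v))"

context LT begin

lemma lin_comm: "lin a \<Longrightarrow> lin b \<Longrightarrow> lin (comm a b)"
  unfolding comm_def by (intro linI) (simp_all add: lin_add lin_scale scale_right_diff_distrib)

lemma lin_shift: "lin a \<Longrightarrow> lin (\<lambda>v. a v - c *s v)"
  by (intro linI) (simp_all add: lin_add lin_scale scale_right_diff_distrib scale_right_distrib scale_left_commute)

lemma KL:
  assumes U: "subspace U" and N: "subspace N" "U \<subseteq> N" and y0: "y0 \<in> N" "y0 \<notin> U"
    and t: "lin t" "\<And>v. v \<in> N \<Longrightarrow> t v \<in> N" "\<And>u. u \<in> U \<Longrightarrow> t u \<in> U"
    and x: "lin x" "\<And>v. v \<in> N \<Longrightarrow> x v \<in> N" "\<And>u. u \<in> U \<Longrightarrow> x u \<in> U"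
    and z: "lin z"
    and nil: "\<And>v. v \<in> N \<Longrightarrow> (t^^K) v \<in> U"
    and c1: "\<And>v. v \<in> N \<Longrightarrow> t (x v) - x (t v) - z v \<in> U"
    and c2: "\<And>v. v \<in> N \<Longrightarrow> t (z v) - z (t v) \<in> U"
  shows "\<exists>y\<in>N. y \<notin> U \<and> z y \<in> U"
proof -
  have F: "(t^^Suc k) (x v) - x ((t^^Suc k) v) - of_nat (Suc k) *s z ((t^^k) v) \<in> U"
    if v: "v \<in> N" for k v
  proof (induction k)
    case 0 then show ?case using c1[OF v] by simp
  next
    case (Suc k)
    define n' where "n' = (t^^Suc k) v"
    define m where "m = (t^^k) v"
    define A where "A = (t^^Suc k) (x v)"
    have n'N: "n' \<in> N" and mN: "m \<in> N" using funpow_in[of N t] t v by (auto simp: n'_def m_def)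
    have tm: "t m = n'" by (simp add: m_def n'_def)
    define c where "c = (of_nat (Suc k) :: 'k)"
    have cc: "of_nat (Suc (Suc k)) = c + 1" by (simp add: c_def)
    have eq: "(t^^Suc (Suc k)) (x v) - x ((t^^Suc (Suc k)) v) - of_nat (Suc (Suc k)) *s z ((t^^Suc k) v)
       = t (A - x n' - c *s z m) + (t (x n') - x (t n') - z n')
         + c *s (t (z m) - z (t m))"
    proof -
      have "(t^^Suc (Suc k)) (x v) = t A" by (simp add: A_def)
      moreover have "(t^^Suc (Suc k)) v = t n'" by (simp add: n'_def)
      moreover have "(t^^Suc k) v = n'" by (simp add: n'_def)
      moreover have "(c + 1) *s z n' = c *s z n' + z n'"
        by (simp add: scale_left_distrib)
      ultimately show ?thesis unfolding cc
        by (simp add: tm lin_diff[OF t(1)] lin_scale[OF t(1)] lin_add[OF t(1)] scale_right_diff_distrib algebra_simps)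
    qed
    have "t (A - x n' - c *s z m) \<in> U" using Suc.IH t(3) by (simp add: A_def n'_def m_def c_def)
    moreover have "t (x n') - x (t n') - z n' \<in> U" using c1[OF n'N] .
    moreover have "c *s (t (z m) - z (t m)) \<in> U" using c2[OF mN] U subspace_scale by blast
    ultimately show ?case unfolding eq using U subspace_add by blast
  qed
  have ex: "\<exists>m. \<forall>v\<in>N. (t^^m) v \<in> U" using nil by blast
  define m0 where "m0 = (LEAST m. \<forall>v\<in>N. (t^^m) v \<in> U)"
  have m0: "\<forall>v\<in>N. (t^^m0) v \<in> U" unfolding m0_def using LeastI_ex[OF ex] .
  have "m0 \<noteq> 0" using m0 y0 by (metis funpow_0)
  then obtain m' where m': "m0 = Suc m'" using not0_implies_Suc by blast
  have "\<not> (\<forall>v\<in>N. (t^^m') v \<in> U)" using not_less_Least[of m' "\<lambda>m. \<forall>v\<in>N. (t^^m) v \<in> U"] m' m0_def by auto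
  then obtain v where v: "v \<in> N" "(t^^m') v \<notin> U" by blast
  have "(t^^m0) (x v) \<in> U" using m0 x(2)[OF v(1)] by blast
  moreover have "x ((t^^m0) v) \<in> U" using m0 v(1) x(3) by blast
  ultimately have "(t^^m0) (x v) - x ((t^^m0) v) \<in> U" using U subspace_diff by blast
  then have "((t^^m0) (x v) - x ((t^^m0) v)) - ((t^^Suc m') (x v) - x ((t^^Suc m') v) - of_nat (Suc m') *s z ((t^^m') v)) \<in> U"
    using F[OF v(1), of m'] U subspace_diff by blast
  then have "of_nat m0 *s z ((t^^m') v) \<in> U" using m' by simp
  then have "inverse (of_nat m0) *s (of_nat m0 *s z ((t^^m') v)) \<in> U" using U subspace_scale by blast
  then have "z ((t^^m') v) \<in> U" using \<open>m0 \<noteq> 0\<close> by simp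
  moreover have "(t^^m') v \<in> N" using funpow_in[of N t] t v by auto
  ultimately show ?thesis using v by blast
qed

lemma NS:
  assumes U: "subspace U" and y: "y \<notin> U" "z y \<in> U" and z: "lin z" "\<And>u. u \<in> U \<Longrightarrow> z u \<in> U"
    and nil: "((\<lambda>v. z v - c *s v)^^K) y \<in> U"
  shows "c = 0"
proof (rule ccontr)
  assume c: "c \<noteq> 0"
  define z' where "z' = (\<lambda>v. z v - c *s v)"
  have lz: "lin z'" unfolding z'_def by (rule lin_shift[OF z(1)])
  have zU: "z' u \<in> U" if "u \<in> U" for u
    unfolding z'_def using z(2)[OF that] that U subspace_diff subspace_scale by blast
  have "(z'^^k) y - (-c)^k *s y \<in> U" for k
  proof (induction k)
    case 0 show ?case using subspace_0[OF U] by simp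
  next
    case (Suc k)
    have "(z'^^Suc k) y - (-c)^Suc k *s y = z' ((z'^^k) y - (-c)^k *s y) + (-c)^k *s z y"
      by (simp add: z'_def lin_diff[OF z(1)] lin_scale[OF z(1)] scale_right_diff_distrib algebra_simps)
    moreover have "z' ((z'^^k) y - (-c)^k *s y) \<in> U" using zU Suc.IH by blast
    moreover have "(-c)^k *s z y \<in> U" using y(2) U subspace_scale by blast
    ultimately show ?case using U subspace_add by metis
  qed
  from this[of K] have "(z'^^K) y - ((z'^^K) y - (-c)^K *s y) \<in> U"
    using nil z'_def U subspace_diff by blast
  then have "(-c)^K *s y \<in> U" by simp
  then have "inverse ((-c)^K) *s ((-c)^K *s y) \<in> U" using U subspace_scale by blast
  then have "y \<in> U" using c by simp
  with y show False by blast
qed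

lemma FT:
  assumes U: "subspace U" and x: "lin x" "\<And>u. u \<in> U \<Longrightarrow> x u \<in> U"
    and F: "\<And>S. S \<in> F \<Longrightarrow> S w - \<mu> S *s w \<in> U"
    and H: "\<And>i. (\<forall>S\<in>F. S ((x^^i) w) - \<mu> S *s (x^^i) w \<in> flag U x w i) \<Longrightarrow>
              \<forall>S\<in>F. S (x ((x^^i) w)) - x (S ((x^^i) w)) \<in> flag U x w (Suc i)"
  shows "\<forall>S\<in>F. S ((x^^i) w) - \<mu> S *s (x^^i) w \<in> flag U x w i"
proof (induction i)
  case 0 then show ?case using F flag_0[OF U] by simp
next
  case (Suc i)
  show ?case
  proof
    fix S assume S: "S \<in> F"
    define a where "a = (x^^i) w"
    have "S ((x^^Suc i) w) - \<mu> S *s (x^^Suc i) w = x (S a - \<mu> S *s a) + (S (x a) - x (S a))"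
      by (simp add: a_def lin_diff[OF x(1)] lin_scale[OF x(1)])
    moreover have "x (S a - \<mu> S *s a) \<in> flag U x w (Suc i)" using flag_step[OF x] Suc.IH S a_def by blast
    moreover have "S (x a) - x (S a) \<in> flag U x w (Suc i)" using H[OF Suc.IH] S a_def by blast
    ultimately show "S ((x^^Suc i) w) - \<mu> S *s (x^^Suc i) w \<in> flag U x w (Suc i)"
      using flag_subspace subspace_add by metis
  qed
qed

lemma FT2:
  assumes U: "subspace U" and S: "lin S" "\<And>u. u \<in> U \<Longrightarrow> S u \<in> U"
    and tri: "\<And>i. S ((x^^i) w) - \<mu> *s (x^^i) w \<in> flag U x w i"
  shows FT2a: "v \<in> flag U x w i \<Longrightarrow> S v \<in> flag U x w i"
    and FT2b: "v \<in> flag U x w i \<Longrightarrow> ((\<lambda>v. S v - \<mu> *s v)^^i) v \<in> U"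
proof -
  assume v: "v \<in> flag U x w i"
  have "S g \<in> flag U x w i" if "g \<in> U \<union> {(x^^l) w | l. l < i}" for g
  proof -
    from that consider "g \<in> U" | l where "l < i" "g = (x^^l) w" by blast
    then show ?thesis
    proof cases
      case 1 then show ?thesis using S(2) flag_U by blast
    next
      case 2
      have "S g = (S g - \<mu> *s g) + \<mu> *s g" by simp
      moreover have "S g - \<mu> *s g \<in> flag U x w i" using tri[of l] 2 flag_mono[of l i] by auto
      moreover have "\<mu> *s g \<in> flag U x w i" using 2 flag_mem[of l i] flag_subspace subspace_scale by blast
      ultimately show ?thesis using flag_subspace subspace_add by metis
    qed
  qed
  from lin_span_into[OF S(1) this[unfolded flag_def] v[unfolded flag_def]]
  show "S v \<in> flag U x w i" unfolding flag_def .
next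
  define s where "s = (\<lambda>v. S v - \<mu> *s v)"
  have ls: "lin s" unfolding s_def by (rule lin_shift[OF S(1)])
  have step: "s v \<in> flag U x w i" if "v \<in> flag U x w (Suc i)" for v i
  proof -
    have "s g \<in> flag U x w i" if "g \<in> U \<union> {(x^^l) w | l. l < Suc i}" for g
    proof -
      from that consider "g \<in> U" | l where "l < Suc i" "g = (x^^l) w" by blast
      then show ?thesis
      proof cases
        case 1 then have "s g \<in> U" unfolding s_def using S(2) U subspace_diff subspace_scale by blast
        then show ?thesis using flag_U by blast
      next
        case 2
        then show ?thesis using tri[of l] flag_mono[of l i] unfolding s_def by auto
      qed
    qed
    from lin_span_into[OF ls this[unfolded flag_def] that[unfolded flag_def]]
    show ?thesis unfolding flag_def .
  qed
  have "v \<in> flag U x w i \<Longrightarrow> (s^^i) v \<in> U" for v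
  proof (induction i arbitrary: v)
    case 0 then show ?case using flag_0[OF U] by simp
  next
    case (Suc i)
    have "(s^^Suc i) v = (s^^i) (s v)" by (simp add: funpow_swap1)
    then show ?case using Suc.IH step Suc.prems by simp
  qed
  then show "v \<in> flag U x w i \<Longrightarrow> ((\<lambda>v. S v - \<mu> *s v)^^i) v \<in> U" unfolding s_def .
qed

end


context LT begin

lemma SC:
  assumes U: "subspace U" and W: "subspace W" "U \<subseteq> W" "w0 \<in> W" "w0 \<notin> U"
   and a: "lin a" "\<And>v. v \<in> W \<Longrightarrow> a v \<in> W" "\<And>u. u \<in> U \<Longrightarrow> a u \<in> U"
   and b: "lin b" "\<And>v. v \<in> W \<Longrightarrow> b v \<in> W" "\<And>u. u \<in> U \<Longrightarrow> b u \<in> U"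
   and c: "\<And>v. v \<in> W \<Longrightarrow> a (b v) - b (a v) - c *s v \<in> U"
  shows "c = 0"
proof -
  obtain \<mu> w where w: "w \<in> W" "w \<notin> U" "b w - \<mu> *s w \<in> U"
    using eigen[OF U W(1,2) b(1) b(2) W(3,4)] by blast
  obtain K where K: "(a^^K) w \<in> flag U a w K" using flag_stab by blast
  have NW: "flag U a w i \<subseteq> W" for i using flag_in[OF W(1,2) w(1) a(2)] .
  have aw: "(a^^i) w \<in> W" for i using funpow_in[of W a] a(2) w(1) by blast
  have tri0: "\<forall>S\<in>{b}. S ((a^^i) w) - (\<lambda>_. \<mu>) S *s (a^^i) w \<in> flag U a w i" for i
  proof (rule FT[OF U a(1,3)])
    show "S w - (\<lambda>_. \<mu>) S *s w \<in> U" if "S \<in> {b}" for S using that w(3) by simp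
  next
    fix i
    have "b (a ((a^^i) w)) - a (b ((a^^i) w)) = - (a (b ((a^^i) w)) - b (a ((a^^i) w)) - c *s (a^^i) w) + (- c) *s (a^^i) w"
      by (simp add: scale_minus_left)
    moreover have "- (a (b ((a^^i) w)) - b (a ((a^^i) w)) - c *s (a^^i) w) \<in> flag U a w (Suc i)"
      using c[OF aw[of i]] U subspace_neg flag_U by blast
    moreover have "(- c) *s (a^^i) w \<in> flag U a w (Suc i)"
      using flag_mem[of i "Suc i"] flag_subspace subspace_scale by blast
    ultimately have "b (a ((a^^i) w)) - a (b ((a^^i) w)) \<in> flag U a w (Suc i)"
      using flag_subspace subspace_add by metis
    then show "\<forall>S\<in>{b}. S (a ((a^^i) w)) - a (S ((a^^i) w)) \<in> flag U a w (Suc i)" by simp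
  qed
  then have tri: "b ((a^^i) w) - \<mu> *s (a^^i) w \<in> flag U a w i" for i by simp
  define t where "t = (\<lambda>v. b v - \<mu> *s v)"
  have lt: "lin t" unfolding t_def by (rule lin_shift[OF b(1)])
  have tN: "t v \<in> flag U a w K" if "v \<in> flag U a w K" for v
  proof -
    have "b v \<in> flag U a w K" using FT2a[OF U b(1,3) tri that] .
    moreover have "\<mu> *s v \<in> flag U a w K" using that flag_subspace subspace_scale by blast
    ultimately show ?thesis unfolding t_def using flag_subspace subspace_diff by blast
  qed
  have tU: "t u \<in> U" if "u \<in> U" for u unfolding t_def using b(3)[OF that] that U subspace_diff subspace_scale by blast
  have nil: "(t^^K) v \<in> U" if "v \<in> flag U a w K" for v
    unfolding t_def using FT2b[OF U b(1,3) tri that] .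
  have "K \<noteq> 0" using K w(2) flag_0[OF U] by (metis funpow_0)
  then have wN: "w \<in> flag U a w K" using flag_mem[of 0 K] by simp
  have "\<exists>y\<in>flag U a w K. y \<notin> U \<and> (\<lambda>v. (-c) *s v) y \<in> U"
  proof (rule KL[OF U flag_subspace flag_U wN w(2) lt tN tU a(1) _ a(3) _ nil])
    show "a v \<in> flag U a w K" if "v \<in> flag U a w K" for v using flag_inv[OF a(1) a(3) K that] .
    show "lin (\<lambda>v. (-c) *s v)" by (intro linI) (simp_all add: scale_right_distrib scale_left_commute)
    show "t (a v) - a (t v) - (- c) *s v \<in> U" if "v \<in> flag U a w K" for v
    proof -
      have eq: "t (a v) - a (t v) - (- c) *s v = - (a (b v) - b (a v) - c *s v)"
        unfolding t_def by (simp add: lin_diff[OF a(1)] lin_scale[OF a(1)] scale_minus_left algebra_simps)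
      have "v \<in> W" using NW that by blast
      then have "- (a (b v) - b (a v) - c *s v) \<in> U" using c[of v] U subspace_neg by blast
      then show ?thesis unfolding eq .
    qed
    show "t ((- c) *s v) - (- c) *s t v \<in> U" for v
    proof -
      have "t ((- c) *s v) - (- c) *s t v = 0" by (simp only: lin_scale[OF lt]) simp
      then show ?thesis using subspace_0[OF U] by simp
    qed
  qed
  then obtain y where y: "y \<notin> U" "(- c) *s y \<in> U" by blast
  show "c = 0"
  proof (rule ccontr)
    assume "c \<noteq> 0"
    then have "inverse (- c) *s ((- c) *s y) \<in> U" using y(2) U subspace_scale by blast
    then have "y \<in> U" using \<open>c \<noteq> 0\<close> by simp
    with y(1) show False by blast
  qed
qed

lemma CE:
  assumes U: "subspace U" and W: "subspace W" "U \<subseteq> W" "w0 \<in> W" "w0 \<notin> U"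
   and F: "\<And>T. T \<in> F \<Longrightarrow> lin T" "\<And>T v. T \<in> F \<Longrightarrow> v \<in> W \<Longrightarrow> T v \<in> W"
          "\<And>T u. T \<in> F \<Longrightarrow> u \<in> U \<Longrightarrow> T u \<in> U"
   and cm: "\<And>a b v. a \<in> F \<Longrightarrow> b \<in> F \<Longrightarrow> v \<in> W \<Longrightarrow> a (b v) - b (a v) \<in> U"
  shows "\<exists>E \<mu>. subspace E \<and> U \<subseteq> E \<and> E \<subseteq> W \<and> (\<exists>e\<in>E. e \<notin> U) \<and> (\<forall>T\<in>F. \<forall>e\<in>E. T e - \<mu> T *s e \<in> U)"
proof -
  define P where "P E \<longleftrightarrow> subspace E \<and> U \<subseteq> E \<and> E \<subseteq> W \<and> (\<exists>e\<in>E. e \<notin> U) \<and> (\<forall>T\<in>F. \<forall>e\<in>E. T e \<in> E)" for E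
  have "P W" using assms unfolding P_def by blast
  then obtain E where PE: "P E" and minE: "\<And>E'. P E' \<Longrightarrow> dim E \<le> dim E'"
    using ex_has_least_nat[of P W dim] by blast
  have scal: "\<exists>c. \<forall>e\<in>E. T e - c *s e \<in> U" if T: "T \<in> F" for T
  proof -
    from PE obtain e0 where e0: "e0 \<in> E" "e0 \<notin> U" unfolding P_def by blast
    have ES: "subspace E" "U \<subseteq> E" "E \<subseteq> W" using PE unfolding P_def by auto
    obtain c e where ce: "e \<in> E" "e \<notin> U" "T e - c *s e \<in> U"
      using eigen[OF U ES(1,2) F(1)[OF T] _ e0] PE T unfolding P_def by blast
    define Ec where "Ec = {v\<in>E. T v - c *s v \<in> U}"
    have sEc: "subspace Ec" unfolding subspace_def Ec_def
    proof (intro conjI ballI allI)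
      show "0 \<in> {v \<in> E. T v - c *s v \<in> U}" using ES(1) U lin_0[OF F(1)[OF T]] subspace_0 by auto
    next
      fix x y assume x: "x \<in> {v \<in> E. T v - c *s v \<in> U}" and y: "y \<in> {v \<in> E. T v - c *s v \<in> U}"
      have "T (x + y) - c *s (x + y) = (T x - c *s x) + (T y - c *s y)"
        by (simp add: lin_add[OF F(1)[OF T]] scale_right_distrib)
      then show "x + y \<in> {v \<in> E. T v - c *s v \<in> U}" using x y ES(1) U subspace_add by auto
    next
      fix d x assume x: "x \<in> {v \<in> E. T v - c *s v \<in> U}"
      have "T (d *s x) - c *s (d *s x) = d *s (T x - c *s x)"
        by (simp add: lin_scale[OF F(1)[OF T]] scale_right_diff_distrib scale_left_commute)
      then show "d *s x \<in> {v \<in> E. T v - c *s v \<in> U}" using x ES(1) U subspace_scale by auto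
    qed
    have "P Ec" unfolding P_def
    proof (intro conjI)
      show "subspace Ec" by fact
      show "U \<subseteq> Ec" unfolding Ec_def using ES(2) F(3)[OF T] U subspace_diff subspace_scale by blast
      show "Ec \<subseteq> W" unfolding Ec_def using ES(3) by blast
      show "\<exists>e\<in>Ec. e \<notin> U" using ce unfolding Ec_def by blast
      show "\<forall>S\<in>F. \<forall>e\<in>Ec. S e \<in> Ec"
      proof (intro ballI)
        fix S e assume S: "S \<in> F" and e: "e \<in> Ec"
        have eE: "e \<in> E" "T e - c *s e \<in> U" using e unfolding Ec_def by auto
        have "S e \<in> E" using PE S eE(1) unfolding P_def by blast
        moreover have eq: "T (S e) - c *s S e = (T (S e) - S (T e)) + S (T e - c *s e)"
          by (simp add: lin_diff[OF F(1)[OF S]] lin_scale[OF F(1)[OF S]])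
        have "T (S e) - S (T e) \<in> U" using cm[OF T S] eE(1) ES(3) by blast
        moreover have "S (T e - c *s e) \<in> U" using F(3)[OF S eE(2)] .
        ultimately have "T (S e) - c *s S e \<in> U" unfolding eq using U subspace_add by blast
        with \<open>S e \<in> E\<close> show "S e \<in> Ec" unfolding Ec_def by blast
      qed
    qed
    then have "dim E \<le> dim Ec" by (rule minE)
    moreover have "Ec \<subseteq> E" unfolding Ec_def by blast
    ultimately have "Ec = E" using subspace_dim_equal[OF sEc ES(1)] by blast
    then show ?thesis unfolding Ec_def by blast
  qed
  define \<mu> where "\<mu> T = (SOME c. \<forall>e\<in>E. T e - c *s e \<in> U)" for T
  have "\<forall>T\<in>F. \<forall>e\<in>E. T e - \<mu> T *s e \<in> U"
    unfolding \<mu>_def using someI_ex[OF scal] by blast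
  then show ?thesis using PE unfolding P_def by blast
qed

end


context LT begin

lemma INV:
  assumes U: "subspace U" and W: "subspace W" "U \<subseteq> W"
   and F: "\<And>T. T \<in> F \<Longrightarrow> lin T" "\<And>T v. T \<in> F \<Longrightarrow> v \<in> W \<Longrightarrow> T v \<in> W"
          "\<And>T u. T \<in> F \<Longrightarrow> u \<in> U \<Longrightarrow> T u \<in> U"
   and cm: "\<And>a b v. a \<in> F \<Longrightarrow> b \<in> F \<Longrightarrow> v \<in> W \<Longrightarrow> a (b v) - b (a v) \<in> U"
   and x: "lin x" "\<And>v. v \<in> W \<Longrightarrow> x v \<in> W" "\<And>u. u \<in> U \<Longrightarrow> x u \<in> U"
   and Fx: "\<And>T. T \<in> F \<Longrightarrow> comm T x \<in> F"
   and w: "w \<in> W" "\<And>T. T \<in> F \<Longrightarrow> T w - \<mu> T *s w \<in> U"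
   and T: "T \<in> F"
  shows "T (x w) - \<mu> T *s x w \<in> U"
proof (cases "w \<in> U")
  case True
  then have "x w \<in> U" using x(3) by blast
  then show ?thesis using F(3)[OF T] U subspace_diff subspace_scale by blast
next
  case False
  obtain K where K: "(x^^K) w \<in> flag U x w K" using flag_stab by blast
  have NW: "flag U x w i \<subseteq> W" for i using flag_in[OF W(1,2) w(1) x(2)] .
  have tri0: "\<forall>S\<in>F. S ((x^^i) w) - \<mu> S *s (x^^i) w \<in> flag U x w i" for i
  proof (rule FT[OF U x(1,3)])
    show "S w - \<mu> S *s w \<in> U" if "S \<in> F" for S using w(2) that .
  next
    fix i assume IH: "\<forall>S\<in>F. S ((x^^i) w) - \<mu> S *s (x^^i) w \<in> flag U x w i"
    show "\<forall>S\<in>F. S (x ((x^^i) w)) - x (S ((x^^i) w)) \<in> flag U x w (Suc i)"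
    proof
      fix S assume S: "S \<in> F"
      have z: "comm S x \<in> F" using Fx[OF S] .
      have eq: "S (x ((x^^i) w)) - x (S ((x^^i) w))
          = (comm S x ((x^^i) w) - \<mu> (comm S x) *s (x^^i) w) + \<mu> (comm S x) *s (x^^i) w"
        by (simp add: comm_def)
      have "comm S x ((x^^i) w) - \<mu> (comm S x) *s (x^^i) w \<in> flag U x w i"
        using IH z by blast
      then have "comm S x ((x^^i) w) - \<mu> (comm S x) *s (x^^i) w \<in> flag U x w (Suc i)"
        using flag_mono[of i "Suc i" U x w] by auto
      moreover have "\<mu> (comm S x) *s (x^^i) w \<in> flag U x w (Suc i)"
        using flag_mem[of i "Suc i"] flag_subspace subspace_scale by blast
      ultimately show "S (x ((x^^i) w)) - x (S ((x^^i) w)) \<in> flag U x w (Suc i)"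
        unfolding eq using flag_subspace subspace_add by blast
    qed
  qed
  have tri: "S ((x^^i) w) - \<mu> S *s (x^^i) w \<in> flag U x w i" if "S \<in> F" for S i
    using tri0 that by blast
  define z where "z = comm T x"
  have zF: "z \<in> F" unfolding z_def using Fx[OF T] .
  have lzz: "lin z" unfolding z_def using lin_comm F(1)[OF T] x(1) by blast
  define t where "t = (\<lambda>v. T v - \<mu> T *s v)"
  have lt: "lin t" unfolding t_def by (rule lin_shift[OF F(1)[OF T]])
  have "K \<noteq> 0" using K False flag_0[OF U] by (metis funpow_0)
  then have wN: "w \<in> flag U x w K" using flag_mem[of 0 K] by simp
  have tN: "t v \<in> flag U x w K" if "v \<in> flag U x w K" for v
  proof -
    have "T v \<in> flag U x w K" using FT2a[OF U F(1)[OF T] F(3)[OF T] tri[OF T] that] .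
    moreover have "\<mu> T *s v \<in> flag U x w K" using that flag_subspace subspace_scale by blast
    ultimately show ?thesis unfolding t_def using flag_subspace subspace_diff by blast
  qed
  have tU: "t u \<in> U" if "u \<in> U" for u
    unfolding t_def using F(3)[OF T that] that U subspace_diff subspace_scale by blast
  have nil: "(t^^K) v \<in> U" if "v \<in> flag U x w K" for v
    unfolding t_def using FT2b[OF U F(1)[OF T] F(3)[OF T] tri[OF T] that] .
  have "\<exists>y\<in>flag U x w K. y \<notin> U \<and> z y \<in> U"
  proof (rule KL[OF U flag_subspace flag_U wN False lt tN tU x(1) _ x(3) lzz nil])
    show "x v \<in> flag U x w K" if "v \<in> flag U x w K" for v using flag_inv[OF x(1) x(3) K that] .
    show "t (x v) - x (t v) - z v \<in> U" for v
    proof -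
      have "t (x v) - x (t v) - z v = 0"
        by (simp add: t_def z_def comm_def lin_diff[OF x(1)] lin_scale[OF x(1)])
      then show ?thesis using subspace_0[OF U] by simp
    qed
    show "t (z v) - z (t v) \<in> U" if "v \<in> flag U x w K" for v
    proof -
      have "t (z v) - z (t v) = T (z v) - z (T v)"
        by (simp add: t_def lin_diff[OF lzz] lin_scale[OF lzz])
      moreover have "v \<in> W" using that NW by blast
      ultimately show ?thesis using cm[OF T zF] by simp
    qed
  qed
  then obtain y where y: "y \<in> flag U x w K" "y \<notin> U" "z y \<in> U" by blast
  have zU: "z u \<in> U" if "u \<in> U" for u using F(3)[OF zF that] .
  have "\<mu> z = 0"
    by (rule NS[OF U y(2,3) lzz zU FT2b[OF U F(1)[OF zF] F(3)[OF zF] tri[OF zF] y(1)]])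
  then have zw: "z w \<in> U" using w(2)[OF zF] by simp
  have eq: "T (x w) - \<mu> T *s x w = z w + x (T w - \<mu> T *s w)"
    by (simp add: z_def comm_def lin_diff[OF x(1)] lin_scale[OF x(1)])
  show ?thesis unfolding eq using zw x(3)[OF w(2)[OF T]] U subspace_add by blast
qed

lemma lie_main:
  assumes U: "subspace U" "U \<noteq> UNIV"
   and g: "\<And>x. x \<in> g \<Longrightarrow> lin x" "\<And>x u. x \<in> g \<Longrightarrow> u \<in> U \<Longrightarrow> x u \<in> U"
   and S: "\<And>j. S j \<subseteq> g" "\<And>j T x. T \<in> S j \<Longrightarrow> x \<in> g \<Longrightarrow> comm T x \<in> S j"
       "\<And>j a b. a \<in> S j \<Longrightarrow> b \<in> S j \<Longrightarrow> comm a b \<in> S (Suc j)"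
       "\<And>T v. T \<in> S s \<Longrightarrow> T v = 0"
  shows "\<exists>v. v \<notin> U \<and> (\<forall>T\<in>S 0. \<exists>c. T v - c *s v \<in> U)"
proof -
  define Cl where "Cl j \<longleftrightarrow> (\<exists>W. subspace W \<and> U \<subseteq> W \<and> (\<exists>w\<in>W. w \<notin> U) \<and> (\<forall>x\<in>g. \<forall>v\<in>W. x v \<in> W)
       \<and> (\<forall>T\<in>S j. \<exists>c. \<forall>v\<in>W. T v - c *s v \<in> U))" for j
  have Cs: "Cl s"
  proof -
    obtain w where "w \<notin> U" using U(2) by blast
    moreover have "\<forall>T\<in>S s. \<exists>c. \<forall>v\<in>UNIV. T v - c *s v \<in> U"
    proof (intro ballI exI[of _ 0])
      fix T v assume "T \<in> S s"
      then have "T v = 0" by (rule S(4))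
      then show "T v - 0 *s v \<in> U" using subspace_0[OF U(1)] by simp
    qed
    ultimately show ?thesis unfolding Cl_def by (intro exI[of _ UNIV]) auto
  qed
  have step: "Cl j" if "Cl (Suc j)" for j
  proof -
    from that obtain W where W: "subspace W" "U \<subseteq> W" "\<exists>w\<in>W. w \<notin> U" "\<forall>x\<in>g. \<forall>v\<in>W. x v \<in> W"
        "\<forall>T\<in>S (Suc j). \<exists>c. \<forall>v\<in>W. T v - c *s v \<in> U" unfolding Cl_def by blast
    obtain w0 where w0: "w0 \<in> W" "w0 \<notin> U" using W(3) by blast
    have Sg: "T \<in> g" if "T \<in> S j" for T using S(1) that by blast
    have gW: "x v \<in> W" if "x \<in> g" "v \<in> W" for x v using W(4) that by blast
    have cm: "a (b v) - b (a v) \<in> U" if a: "a \<in> S j" and b: "b \<in> S j" and v: "v \<in> W" for a b v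
    proof -
      obtain c where c: "\<forall>v\<in>W. comm a b v - c *s v \<in> U" using W(5) S(3)[OF a b] by blast
      have "c = 0"
      proof (rule SC[OF U(1) W(1,2) w0 g(1)[OF Sg[OF a]] _ g(2)[OF Sg[OF a]] g(1)[OF Sg[OF b]] _ g(2)[OF Sg[OF b]]])
        show "a v \<in> W" if "v \<in> W" for v using gW[OF Sg[OF a] that] .
        show "b v \<in> W" if "v \<in> W" for v using gW[OF Sg[OF b] that] .
        show "a (b v) - b (a v) - c *s v \<in> U" if "v \<in> W" for v using c that by (simp add: comm_def)
      qed
      then show ?thesis using c v by (simp add: comm_def)
    qed
    have F1: "lin T" if "T \<in> S j" for T using g(1)[OF Sg[OF that]] .
    have F2: "T v \<in> W" if "T \<in> S j" "v \<in> W" for T v using gW[OF Sg[OF that(1)] that(2)] .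
    have F3: "T u \<in> U" if "T \<in> S j" "u \<in> U" for T u using g(2)[OF Sg[OF that(1)] that(2)] .
    have "\<exists>E \<mu>. subspace E \<and> U \<subseteq> E \<and> E \<subseteq> W \<and> (\<exists>e\<in>E. e \<notin> U) \<and> (\<forall>T\<in>S j. \<forall>e\<in>E. T e - \<mu> T *s e \<in> U)"
    proof (rule CE[OF U(1) W(1,2) w0])
      show "lin T" if "T \<in> S j" for T using F1 that .
      show "T v \<in> W" if "T \<in> S j" "v \<in> W" for T v using F2 that .
      show "T u \<in> U" if "T \<in> S j" "u \<in> U" for T u using F3 that .
      show "a (b v) - b (a v) \<in> U" if "a \<in> S j" "b \<in> S j" "v \<in> W" for a b v using cm that .
    qed
    then obtain E \<mu> where E: "subspace E" "U \<subseteq> E" "E \<subseteq> W" "\<exists>e\<in>E. e \<notin> U"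
        "\<forall>T\<in>S j. \<forall>e\<in>E. T e - \<mu> T *s e \<in> U" by blast
    define E' where "E' = {v\<in>W. \<forall>T\<in>S j. T v - \<mu> T *s v \<in> U}"
    show "Cl j" unfolding Cl_def
    proof (intro exI[of _ E'] conjI)
      show "subspace E'"
      proof (rule subspaceI)
        show "0 \<in> E'" unfolding E'_def using subspace_0[OF W(1)] subspace_0[OF U(1)] by (auto simp: lin_0[OF F1])
      next
        fix a b assume a: "a \<in> E'" and b: "b \<in> E'"
        have "a + b \<in> W" using a b W(1) subspace_add unfolding E'_def by blast
        moreover have "T (a + b) - \<mu> T *s (a + b) \<in> U" if T: "T \<in> S j" for T
        proof -
          have "T (a + b) - \<mu> T *s (a + b) = (T a - \<mu> T *s a) + (T b - \<mu> T *s b)"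
            by (simp add: lin_add[OF F1[OF T]] scale_right_distrib)
          then show ?thesis using a b T U(1) subspace_add unfolding E'_def by auto
        qed
        ultimately show "a + b \<in> E'" unfolding E'_def by blast
      next
        fix d a assume a: "a \<in> E'"
        have "d *s a \<in> W" using a W(1) subspace_scale unfolding E'_def by blast
        moreover have "T (d *s a) - \<mu> T *s (d *s a) \<in> U" if T: "T \<in> S j" for T
        proof -
          have "T (d *s a) - \<mu> T *s (d *s a) = d *s (T a - \<mu> T *s a)"
            by (simp add: lin_scale[OF F1[OF T]] scale_right_diff_distrib scale_left_commute)
          then show ?thesis using a T U(1) subspace_scale unfolding E'_def by auto
        qed
        ultimately show "d *s a \<in> E'" unfolding E'_def by blast
      qed
      show "U \<subseteq> E'" unfolding E'_def using W(2) F3 U(1) subspace_diff subspace_scale by blast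
      show "\<exists>w\<in>E'. w \<notin> U" using E unfolding E'_def by blast
      show "\<forall>x\<in>g. \<forall>v\<in>E'. x v \<in> E'"
      proof (intro ballI)
        fix x v assume x: "x \<in> g" and v: "v \<in> E'"
        have "x v \<in> W" using gW x v unfolding E'_def by blast
        moreover have "\<forall>T\<in>S j. T (x v) - \<mu> T *s x v \<in> U"
        proof
          fix T assume T: "T \<in> S j"
          show "T (x v) - \<mu> T *s x v \<in> U"
          proof (rule INV[where F="S j" and U=U and W=W and x=x and w=v and \<mu>=\<mu> and T=T])
            show "subspace U" by (rule U(1))
            show "subspace W" by (rule W(1))
            show "U \<subseteq> W" by (rule W(2))
            show "lin T" if "T \<in> S j" for T using F1 that .
            show "T v \<in> W" if "T \<in> S j" "v \<in> W" for T v using F2 that .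
            show "T u \<in> U" if "T \<in> S j" "u \<in> U" for T u using F3 that .
            show "a (b v) - b (a v) \<in> U" if "a \<in> S j" "b \<in> S j" "v \<in> W" for a b v using cm that .
            show "lin x" using g(1)[OF x] .
            show "x u \<in> U" if "u \<in> U" for u using g(2)[OF x that] .
            show "x v \<in> W" if "v \<in> W" for v using gW[OF x that] .
            show "comm T x \<in> S j" if "T \<in> S j" for T using S(2)[OF that x] .
            show "v \<in> W" using v unfolding E'_def by blast
            show "T v - \<mu> T *s v \<in> U" if "T \<in> S j" for T using v that unfolding E'_def by blast
            show "T \<in> S j" by (rule T)
          qed
        qed
        ultimately show "x v \<in> E'" unfolding E'_def by blast
      qed
      show "\<forall>T\<in>S j. \<exists>c. \<forall>v\<in>E'. T v - c *s v \<in> U" unfolding E'_def by blast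
    qed
  qed
  have "Cl (s - d)" for d
  proof (induction d)
    case 0 then show ?case using Cs by simp
  next
    case (Suc d)
    show ?case
    proof (cases "d < s")
      case True
      then have "Suc (s - Suc d) = s - d" by simp
      then show ?thesis using step[of "s - Suc d"] Suc.IH by simp
    next
      case False then have "s - Suc d = s - d" by simp
      then show ?thesis using Suc.IH by simp
    qed
  qed
  from this[of s] have "Cl 0" by simp
  then obtain W where W: "\<exists>w\<in>W. w \<notin> U" "\<forall>T\<in>S 0. \<exists>c. \<forall>v\<in>W. T v - c *s v \<in> U"
    unfolding Cl_def by blast
  then obtain w where "w \<in> W" "w \<notin> U" by blast
  then show ?thesis using W(2) by blast
qed

end


definition sw :: "'a list \<Rightarrow> nat \<Rightarrow> nat \<Rightarrow> 'a list" where
  "sw xs i j = xs[i := xs ! j, j := xs ! i]"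

lemma sw_length[simp]: "length (sw xs i j) = length xs" by (simp add: sw_def)
lemma sw_nth1: "i < length xs \<Longrightarrow> j < length xs \<Longrightarrow> sw xs i j ! i = xs ! j"
  by (simp add: sw_def nth_list_update)
lemma sw_nth2: "i < length xs \<Longrightarrow> j < length xs \<Longrightarrow> sw xs i j ! j = xs ! i"
  by (simp add: sw_def nth_list_update)
lemma sw_nth3: "k < length xs \<Longrightarrow> k \<noteq> i \<Longrightarrow> k \<noteq> j \<Longrightarrow> sw xs i j ! k = xs ! k"
  by (simp add: sw_def nth_list_update)
lemma sw_same: "sw xs i i = xs" by (simp add: sw_def)

locale PN = LT scale Basis
  for scale :: "'k::field_char_0 \<Rightarrow> 'v::comm_ring \<Rightarrow> 'v" (infixr "*s" 75) and Basis +
  fixes n :: nat and br :: "'v list \<Rightarrow> 'v"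
  assumes pn: "poisson_nlie scale n br"
begin

lemma smul: "c *s (x * y) = (c *s x) * y" using pn unfolding poisson_nlie_def by blast
lemma n2: "n \<ge> 2" using pn unfolding poisson_nlie_def by blast
lemma brlin: "length xs = n \<Longrightarrow> i < n \<Longrightarrow> lin (\<lambda>x. br (xs[i := x]))"
  using pn unfolding poisson_nlie_def by blast
lemma skew: "length xs = n \<Longrightarrow> i < n \<Longrightarrow> j < n \<Longrightarrow> i \<noteq> j \<Longrightarrow> br (sw xs i j) = - br xs"
  using pn unfolding poisson_nlie_def sw_def by blast
lemma FI: "length xs = n - 1 \<Longrightarrow> length ys = n \<Longrightarrow>
    br (xs @ [br ys]) = (\<Sum>i<n. br (ys[i := br (xs @ [ys ! i])]))"
  using pn unfolding poisson_nlie_def by blast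
lemma leib: "length xs = n - 1 \<Longrightarrow> br ((y * z) # xs) = y * br (z # xs) + z * br (y # xs)"
  using pn unfolding poisson_nlie_def by blast

lemma smul2: "x * (c *s y) = c *s (x * y)"
  by (metis mult.commute smul)

lemma lin_mult: "lin (\<lambda>v. a * v)"
  by (intro linI) (simp_all add: distrib_left smul2)

lemma sw_mem: assumes "subspace I" "length xs = n" "i < n" "j < n"
  shows "br (sw xs i j) \<in> I \<longleftrightarrow> br xs \<in> I"
proof (cases "i = j")
  case True then show ?thesis by (simp add: sw_same)
next
  case False
  then have "br (sw xs i j) = - br xs" using skew assms by blast
  then show ?thesis using subspace_neg[OF assms(1), of "br xs"] subspace_neg[OF assms(1), of "- br xs"] by auto
qed

lemma lin_first: "length xs = n - 1 \<Longrightarrow> lin (\<lambda>v. br (v # xs))"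
  using brlin[of "0 # xs" 0] n2 by simp

lemma lin_last: assumes "length xs = n - 1" shows "lin (\<lambda>v. br (xs @ [v]))"
proof -
  have "(xs @ [0])[n - 1 := v] = xs @ [v]" for v using assms by (simp add: list_update_append)
  then show ?thesis using brlin[of "xs @ [0]" "n - 1"] n2 assms by simp
qed

lemma br_zero: assumes "length xs = n" "i < n" "xs ! i = 0" shows "br xs = 0"
proof -
  have "xs[i := 0] = xs" using assms list_update_id[of xs i] by simp
  then show ?thesis using lin_0[OF brlin[OF assms(1,2)]] by simp
qed

lemma brFL: assumes "length bs = n - 2" shows "br (v # bs @ [l]) = - br (l # bs @ [v])"
proof -
  obtain m where m: "n = Suc (Suc m)" using n2 by (metis add_2_eq_Suc le_Suc_ex)
  have lb: "length bs = m" using assms m by simp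
  have "sw (v # bs @ [l]) 0 (n - 1) = l # bs @ [v]"
    using lb m by (simp add: sw_def nth_append list_update_append)
  moreover have "length (v # bs @ [l]) = n" using assms n2 by simp
  ultimately show ?thesis using skew[of "v # bs @ [l]" 0 "n - 1"] n2 by simp
qed

lemma split_last: assumes "length xs = n - 1" obtains bs l where "xs = bs @ [l]" "length bs = n - 2"
proof -
  have "xs \<noteq> []" using assms n2 by auto
  then have "xs = butlast xs @ [last xs]" by simp
  moreover have "length (butlast xs) = n - 2" using assms by simp
  ultimately show ?thesis using that by blast
qed

lemma split_first: assumes "length xs = n - 1" obtains bs l where "xs = l # bs" "length bs = n - 2"
proof -
  have "xs \<noteq> []" using assms n2 by auto
  then have "xs = hd xs # tl xs" by simp
  moreover have "length (tl xs) = n - 2" using assms by simp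
  ultimately show ?thesis using that by blast
qed

lemma leib_last: assumes "length xs = n - 1"
  shows "br (xs @ [y * z]) = y * br (xs @ [z]) + z * br (xs @ [y])"
proof -
  obtain bs l where xs: "xs = l # bs" "length bs = n - 2" using split_first[OF assms] .
  have l1: "length (bs @ [l]) = n - 1" using xs(2) n2 by simp
  have "br (xs @ [y * z]) = - br ((y * z) # bs @ [l])" by (simp add: xs(1) brFL[OF xs(2), of "y * z" l])
  also have "\<dots> = - (y * br (z # bs @ [l]) + z * br (y # bs @ [l]))" using leib[OF l1] by simp
  also have "\<dots> = y * br (xs @ [z]) + z * br (xs @ [y])"
    using brFL[OF xs(2), of z l] brFL[OF xs(2), of y l] xs(1) by (simp add: algebra_simps)
  finally show ?thesis .
qed

lemma anypos: assumes I: "pn_ideal scale n br I" and xs: "length xs = n" "i < n" "xs ! i \<in> I"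
  shows "br xs \<in> I"
proof -
  have sI: "subspace I" using I unfolding pn_ideal_def by blast
  define ys where "ys = sw xs 0 i"
  have n0: "0 < n" using n2 by simp
  have ly: "length ys = n" using xs unfolding ys_def by simp
  have y0: "ys ! 0 = xs ! i" unfolding ys_def using sw_nth1[of 0 xs i] xs n0 by simp
  have Ib: "\<And>x zs. x \<in> I \<Longrightarrow> length zs = n - 1 \<Longrightarrow> br (x # zs) \<in> I"
    using I unfolding pn_ideal_def by blast
  have "ys = ys ! 0 # drop 1 ys" using Cons_nth_drop_Suc[of 0 ys] ly n0 by simp
  moreover have "length (drop 1 ys) = n - 1" using ly by simp
  ultimately have "br ys \<in> I" using Ib[of "ys ! 0" "drop 1 ys"] xs(3) y0 by simp
  then show ?thesis using sw_mem[OF sI xs(1) n0 xs(2)] unfolding ys_def by blast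
qed

abbreviation D where "D k \<equiv> derived scale n br k"

lemma D_Suc: "D (Suc k) = span ({br (a # b # zs) | a b zs. a \<in> D k \<and> b \<in> D k \<and> length zs = n - 2}
        \<union> {a * b | a b. a \<in> D k \<and> b \<in> D k})"
  by simp

lemma twopos01: assumes "length ys = n" "ys ! 0 \<in> D k" "ys ! 1 \<in> D k"
  shows "br ys \<in> D (Suc k)"
proof -
  have a: "drop 1 ys = ys ! 1 # drop 2 ys"
    using Cons_nth_drop_Suc[of 1 ys] assms(1) n2 by (simp add: numeral_2_eq_2)
  have b: "ys = ys ! 0 # drop 1 ys" using Cons_nth_drop_Suc[of 0 ys] assms(1) n2 by simp
  have "ys = ys ! 0 # ys ! 1 # drop 2 ys" using a b by simp
  then have "br ys = br (ys ! 0 # ys ! 1 # drop 2 ys)" by (rule arg_cong)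
  moreover have "length (drop 2 ys) = n - 2" using assms(1) by simp
  ultimately have "br ys \<in> {br (a # b # zs) | a b zs. a \<in> D k \<and> b \<in> D k \<and> length zs = n - 2}"
    using assms(2,3) by blast
  then show ?thesis unfolding D_Suc by (rule span_base[OF UnI1])
qed

end


context PN begin

lemma D_ideal: "pn_ideal scale n br (D k)"
proof (induction k)
  case 0
  then show ?case by (simp add: pn_ideal_def)
next
  case (Suc k)
  define A where "A = {br (a # b # zs) | a b zs. a \<in> D k \<and> b \<in> D k \<and> length zs = n - 2}"
  define B where "B = {a * b | a b. a \<in> D k \<and> b \<in> D k}"
  have DS: "D (Suc k) = span (A \<union> B)" unfolding A_def B_def by (rule D_Suc)
  have sub: "subspace (D (Suc k))" unfolding DS by simp
  have IHm: "p * x \<in> D k" if "x \<in> D k" for p x using Suc.IH that unfolding pn_ideal_def by blast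
  have IHs: "subspace (D k)" using Suc.IH unfolding pn_ideal_def by blast
  have Ain: "y \<in> A \<Longrightarrow> y \<in> D (Suc k)" for y unfolding DS by (rule span_base) blast
  have Bin: "y \<in> B \<Longrightarrow> y \<in> D (Suc k)" for y unfolding DS by (rule span_base) blast
  have mult: "p * x \<in> D (Suc k)" if x: "x \<in> D (Suc k)" for p x
  proof (rule lin_sub_into[OF lin_mult sub])
    show "x \<in> span (A \<union> B)" using x DS by simp
    fix g assume "g \<in> A \<union> B"
    then consider a b zs where "g = br (a # b # zs)" "a \<in> D k" "b \<in> D k" "length zs = n - 2"
      | a b where "g = a * b" "a \<in> D k" "b \<in> D k" unfolding A_def B_def by blast
    then show "p * g \<in> D (Suc k)"
    proof cases
      case 1
      have l: "length (b # zs) = n - 1" using 1 n2 by simp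
      have eq: "p * g = br ((p * a) # b # zs) - a * br (p # b # zs)"
        using leib[OF l, of p a] 1 by (simp add: algebra_simps)
      have "br ((p * a) # b # zs) \<in> A" using 1(2-4) IHm[OF 1(2), of p] unfolding A_def by blast
      then have "br ((p * a) # b # zs) \<in> D (Suc k)" by (rule Ain)
      moreover have "br (p # b # zs) \<in> D k"
        by (rule anypos[OF Suc.IH, of _ 1]) (use 1 n2 in auto)
      then have "a * br (p # b # zs) \<in> B" using 1(2) unfolding B_def by blast
      then have "a * br (p # b # zs) \<in> D (Suc k)" by (rule Bin)
      ultimately show ?thesis unfolding eq using sub subspace_diff by blast
    next
      case 2
      have "p * g = (p * a) * b" using 2 by (simp add: mult.assoc)
      moreover have "(p * a) * b \<in> B" using 2(2,3) IHm[OF 2(2), of p] unfolding B_def by blast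
      ultimately show ?thesis using Bin by simp
    qed
  qed
  have brk: "br (x # xs) \<in> D (Suc k)" if x: "x \<in> D (Suc k)" and xs: "length xs = n - 1" for x xs
  proof (rule lin_sub_into[OF lin_first[OF xs] sub])
    show "x \<in> span (A \<union> B)" using x DS by simp
    fix g assume "g \<in> A \<union> B"
    then consider a b zs where "g = br (a # b # zs)" "a \<in> D k" "b \<in> D k" "length zs = n - 2"
      | a b where "g = a * b" "a \<in> D k" "b \<in> D k" unfolding A_def B_def by blast
    then show "br (g # xs) \<in> D (Suc k)"
    proof cases
      case 1
      obtain bs l where bl: "xs = bs @ [l]" "length bs = n - 2" using split_last[OF xs] .
      define ys where "ys = a # b # zs"
      have ly: "length ys = n" using 1 n2 unfolding ys_def by simp
      have lx: "length ((l # bs) @ [g]) = n" using bl n2 by simp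
      have lx': "length (l # bs) = n - 1" using bl n2 by simp
      have "br (g # xs) = - br ((l # bs) @ [br ys])" using brFL[OF bl(2), of g l] bl(1) 1 ys_def by simp
      also have "\<dots> = - (\<Sum>i<n. br (ys[i := br ((l # bs) @ [ys ! i])]))" using FI[OF lx' ly] by simp
      finally have eq: "br (g # xs) = - (\<Sum>i<n. br (ys[i := br ((l # bs) @ [ys ! i])]))" .
      have terms: "br (ys[i := br ((l # bs) @ [ys ! i])]) \<in> D (Suc k)" if i: "i < n" for i
      proof (rule twopos01)
        show "length (ys[i := br ((l # bs) @ [ys ! i])]) = n" using ly by simp
        have c: "br ((l # bs) @ [ys ! i]) \<in> D k" if "ys ! i \<in> D k"
          by (rule anypos[OF Suc.IH, of _ "n - 1"]) (use that lx' n2 in \<open>auto simp: nth_append\<close>)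
        have y01: "ys ! 0 = a" "ys ! 1 = b" unfolding ys_def by simp_all
        have e0: "ys[i := br ((l # bs) @ [ys ! i])] ! 0 = (if i = 0 then br ((l # bs) @ [ys ! i]) else ys ! 0)"
          using ly n2 by (simp add: nth_list_update)
        have e1: "ys[i := br ((l # bs) @ [ys ! i])] ! 1 = (if i = 1 then br ((l # bs) @ [ys ! i]) else ys ! 1)"
          using ly n2 by (simp add: nth_list_update)
        show "ys[i := br ((l # bs) @ [ys ! i])] ! 0 \<in> D k"
          unfolding e0 using c y01 1 by auto
        show "ys[i := br ((l # bs) @ [ys ! i])] ! 1 \<in> D k"
          unfolding e1 using c y01 1 by auto
      qed
      have "(\<Sum>i<n. br (ys[i := br ((l # bs) @ [ys ! i])])) \<in> D (Suc k)"
        by (rule subspace_sum[OF sub]) (rule terms, simp)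
      then show ?thesis unfolding eq using sub subspace_neg by blast
    next
      case 2
      have "br (g # xs) = a * br (b # xs) + b * br (a # xs)" using leib[OF xs] 2 by simp
      moreover have "a * br (b # xs) \<in> D (Suc k)"
      proof -
        have "br (b # xs) \<in> D k" using 2(3) Suc.IH xs unfolding pn_ideal_def by blast
        then have "a * br (b # xs) \<in> B" using 2(2) unfolding B_def by blast
        then show ?thesis by (rule Bin)
      qed
      moreover have "b * br (a # xs) \<in> D (Suc k)"
      proof -
        have "br (a # xs) \<in> D k" using 2(2) Suc.IH xs unfolding pn_ideal_def by blast
        then have "b * br (a # xs) \<in> B" using 2(3) unfolding B_def by blast
        then show ?thesis by (rule Bin)
      qed
      ultimately show ?thesis using sub subspace_add by metis
    qed
  qed
  show ?case unfolding pn_ideal_def using sub mult brk by blast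
qed

lemma D_sub: "subspace (D k)" using D_ideal unfolding pn_ideal_def by blast

lemma twopos: assumes xs: "length xs = n" "i < n" "j < n" "i \<noteq> j" "xs ! i \<in> D k" "xs ! j \<in> D k"
  shows "br xs \<in> D (Suc k)"
proof -
  have n0: "0 < n" "1 < n" using n2 by auto
  define ys where "ys = sw xs 0 i"
  define j' where "j' = (if j = 0 then i else j)"
  have ly: "length ys = n" unfolding ys_def using xs by simp
  have y0: "ys ! 0 = xs ! i" unfolding ys_def using sw_nth1[of 0 xs i] xs n0 by simp
  have j'n: "j' < n" "j' \<noteq> 0" unfolding j'_def using xs by auto
  have yj: "ys ! j' = xs ! j"
  proof (cases "j = 0")
    case True then show ?thesis unfolding j'_def ys_def using sw_nth2[of 0 xs i] xs n0 by simp
  next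
    case False then show ?thesis unfolding j'_def ys_def using sw_nth3[of j xs 0 i] xs by simp
  qed
  define zs where "zs = sw ys 1 j'"
  have lz: "length zs = n" unfolding zs_def using ly by simp
  have z0: "zs ! 0 = xs ! i" unfolding zs_def using sw_nth3[of 0 ys 1 j'] ly n0 j'n y0 by simp
  have z1: "zs ! 1 = xs ! j" unfolding zs_def using sw_nth1[of 1 ys j'] ly n0 j'n yj by simp
  have "br zs \<in> D (Suc k)" using twopos01[OF lz] z0 z1 xs by simp
  then have "br ys \<in> D (Suc k)" unfolding zs_def using sw_mem[OF D_sub ly n0(2) j'n(1)] by blast
  then show ?thesis unfolding ys_def using sw_mem[OF D_sub xs(1) n0(1) xs(2)] by blast
qed

end


declare derived.simps(2)[simp del]

context PN begin

inductive_set ospan :: "('v \<Rightarrow> 'v) set \<Rightarrow> ('v \<Rightarrow> 'v) set" for A where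
  oz: "(\<lambda>v. 0) \<in> ospan A"
| ob: "a \<in> A \<Longrightarrow> a \<in> ospan A"
| op: "a \<in> ospan A \<Longrightarrow> b \<in> ospan A \<Longrightarrow> (\<lambda>v. a v + b v) \<in> ospan A"
| os: "a \<in> ospan A \<Longrightarrow> (\<lambda>v. c *s a v) \<in> ospan A"

lemma ospan_sum: "finite I \<Longrightarrow> (\<And>i. i \<in> I \<Longrightarrow> f i \<in> ospan A) \<Longrightarrow> (\<lambda>v. \<Sum>i\<in>I. f i v) \<in> ospan A"
proof (induction I rule: finite_induct)
  case empty then show ?case by (simp add: ospan.oz)
next
  case (insert x F)
  have "(\<lambda>v. \<Sum>i\<in>insert x F. f i v) = (\<lambda>v. f x v + (\<lambda>v. \<Sum>i\<in>F. f i v) v)"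
    using insert(1,2) by simp
  then show ?case using insert by (simp add: ospan.op)
qed

lemma ospan_mono: assumes "A \<subseteq> B" shows "a \<in> ospan A \<Longrightarrow> a \<in> ospan B"
  by (induction rule: ospan.induct) (use assms in \<open>auto intro: ospan.intros\<close>)

lemma ospan_lin: assumes "\<And>a. a \<in> A \<Longrightarrow> lin a" shows "a \<in> ospan A \<Longrightarrow> lin a"
proof (induction rule: ospan.induct)
  case oz then show ?case by (intro linI) simp_all
next
  case (ob a) then show ?case using assms by blast
next
  case (op a b) then show ?case
    by (intro linI) (simp_all add: lin_add lin_scale scale_right_distrib algebra_simps)
next
  case (os a c) then show ?case
    by (intro linI) (simp_all add: lin_add lin_scale scale_right_distrib scale_left_commute)
qed

lemma ospan_pres: assumes U: "subspace U" and A: "\<And>a u. a \<in> A \<Longrightarrow> u \<in> U \<Longrightarrow> a u \<in> U"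
  shows "a \<in> ospan A \<Longrightarrow> u \<in> U \<Longrightarrow> a u \<in> U"
proof (induction rule: ospan.induct)
  case oz then show ?case by (simp add: subspace_0[OF U])
next
  case (ob a) then show ?case using A by blast
next
  case (op a b) then show ?case using subspace_add[OF U] by simp
next
  case (os a c) then show ?case using subspace_scale[OF U] by simp
qed

lemma ospan_zero: assumes "\<And>a v. a \<in> A \<Longrightarrow> a v = 0" shows "a \<in> ospan A \<Longrightarrow> a v = 0"
  by (induction rule: ospan.induct) (use assms in auto)

lemma comm_lift:
  assumes linA: "\<And>a. a \<in> A \<Longrightarrow> lin a" and linX: "\<And>x. x \<in> X \<Longrightarrow> lin x"
    and gen: "\<And>a x. a \<in> A \<Longrightarrow> x \<in> X \<Longrightarrow> comm a x \<in> ospan B"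
  shows "a \<in> ospan A \<Longrightarrow> x \<in> ospan X \<Longrightarrow> comm a x \<in> ospan B"
proof -
  have one: "comm a x \<in> ospan B" if a: "a \<in> A" and x: "x \<in> ospan X" for a x
    using x
  proof (induction rule: ospan.induct)
    case oz
    have "comm a (\<lambda>v. 0) = (\<lambda>v. 0)" using lin_0[OF linA[OF a]] by (simp add: comm_def)
    then show ?case by (simp add: ospan.oz)
  next
    case (ob x) then show ?case using gen a by blast
  next
    case (op x1 x2)
    have "comm a (\<lambda>v. x1 v + x2 v) = (\<lambda>v. comm a x1 v + comm a x2 v)"
      using lin_add[OF linA[OF a]] by (simp add: comm_def fun_eq_iff algebra_simps)
    then show ?case using op.IH by (simp add: ospan.op)
  next
    case (os x c)
    have "comm a (\<lambda>v. c *s x v) = (\<lambda>v. c *s comm a x v)"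
      using lin_scale[OF linA[OF a]] by (simp add: comm_def scale_right_diff_distrib)
    then show ?case using os.IH by (simp add: ospan.os)
  qed
  show "a \<in> ospan A \<Longrightarrow> x \<in> ospan X \<Longrightarrow> comm a x \<in> ospan B"
  proof (induction rule: ospan.induct)
    case oz
    have "lin x" using ospan_lin[OF linX oz] .
    then have "comm (\<lambda>v. 0) x = (\<lambda>v. 0)" by (simp add: comm_def lin_0)
    then show ?case by (simp add: ospan.oz)
  next
    case (ob a) then show ?case using one by blast
  next
    case (op a1 a2)
    have "lin x" using ospan_lin[OF linX op.prems] .
    then have "comm (\<lambda>v. a1 v + a2 v) x = (\<lambda>v. comm a1 x v + comm a2 x v)"
      using lin_add by (simp add: comm_def fun_eq_iff algebra_simps)
    then show ?case using op by (simp add: ospan.op)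
  next
    case (os a c)
    have "lin x" using ospan_lin[OF linX os.prems] .
    then have "comm (\<lambda>v. c *s a v) x = (\<lambda>v. c *s comm a x v)"
      using lin_scale by (simp add: comm_def scale_right_diff_distrib)
    then show ?case using os by (simp add: ospan.os)
  qed
qed

definition Lm :: "'v \<Rightarrow> 'v \<Rightarrow> 'v" where "Lm a = (\<lambda>v. a * v)"
definition ad :: "'v list \<Rightarrow> 'v \<Rightarrow> 'v" where "ad xs = (\<lambda>v. br (xs @ [v]))"

lemma CLL: "comm (Lm a) (Lm b) = (\<lambda>v. 0)"
  by (simp add: comm_def Lm_def fun_eq_iff mult.left_commute)

lemma CAL: assumes "length xs = n - 1" shows "comm (ad xs) (Lm b) = Lm (br (xs @ [b]))"
proof (rule ext)
  fix v show "comm (ad xs) (Lm b) v = Lm (br (xs @ [b])) v"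
    using leib_last[OF assms, of b v] by (simp add: comm_def ad_def Lm_def mult.commute)
qed

lemma CLA: assumes "length ys = n - 1" shows "comm (Lm a) (ad ys) = (\<lambda>v. (-1) *s Lm (br (ys @ [a])) v)"
proof (rule ext)
  fix v show "comm (Lm a) (ad ys) v = (-1) *s Lm (br (ys @ [a])) v"
    using leib_last[OF assms, of a v] by (simp add: comm_def ad_def Lm_def mult.commute scale_minus_left)
qed

lemma CAA: assumes xs: "length xs = n - 1" and ys: "length ys = n - 1"
  shows "comm (ad xs) (ad ys) = (\<lambda>v. \<Sum>i<n - 1. ad (ys[i := br (xs @ [ys ! i])]) v)"
proof (rule ext)
  fix v
  have ly: "length (ys @ [v]) = n" using ys n2 by simp
  have nS: "n = Suc (n - 1)" using n2 by simp
  have "br (xs @ [br (ys @ [v])]) = (\<Sum>i<n. br ((ys @ [v])[i := br (xs @ [(ys @ [v]) ! i])]))"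
    using FI[OF xs ly] .
  also have "\<dots> = (\<Sum>i<n - 1. br ((ys @ [v])[i := br (xs @ [(ys @ [v]) ! i])]))
      + br ((ys @ [v])[n - 1 := br (xs @ [(ys @ [v]) ! (n - 1)])])"
    by (subst nS, subst sum.lessThan_Suc) simp
  also have "(\<Sum>i<n - 1. br ((ys @ [v])[i := br (xs @ [(ys @ [v]) ! i])]))
      = (\<Sum>i<n - 1. ad (ys[i := br (xs @ [ys ! i])]) v)"
    by (rule sum.cong) (use ys in \<open>auto simp: ad_def nth_append list_update_append\<close>)
  also have "br ((ys @ [v])[n - 1 := br (xs @ [(ys @ [v]) ! (n - 1)])]) = br (ys @ [br (xs @ [v])])"
    using ys by (simp add: nth_append list_update_append)
  finally show "comm (ad xs) (ad ys) v = (\<Sum>i<n - 1. ad (ys[i := br (xs @ [ys ! i])]) v)"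
    by (simp add: comm_def ad_def)
qed

definition GI :: "'v set \<Rightarrow> ('v \<Rightarrow> 'v) set" where
  "GI I = {Lm a | a. a \<in> I} \<union> {ad xs | xs. length xs = n - 1 \<and> (\<exists>i<n - 1. xs ! i \<in> I)}"
definition TW :: "nat \<Rightarrow> ('v \<Rightarrow> 'v) set" where
  "TW k = {ad xs | xs. length xs = n - 1 \<and> (\<exists>i<n - 1. \<exists>j<n - 1. i \<noteq> j \<and> xs ! i \<in> D k \<and> xs ! j \<in> D k)}"
definition Kk :: "nat \<Rightarrow> ('v \<Rightarrow> 'v) set" where "Kk k = GI (D (Suc k)) \<union> TW k"
definition AA :: "nat \<Rightarrow> ('v \<Rightarrow> 'v) set" where
  "AA j = (if even j then GI (D (j div 2)) else Kk (j div 2))"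

lemma lin_Lm: "lin (Lm a)" unfolding Lm_def by (rule lin_mult)
lemma lin_ad: "length xs = n - 1 \<Longrightarrow> lin (ad xs)" unfolding ad_def by (rule lin_last)

lemma GI_cases: assumes "T \<in> GI I"
  obtains a where "T = Lm a" "a \<in> I" | xs i where "T = ad xs" "length xs = n - 1" "i < n - 1" "xs ! i \<in> I"
  using assms unfolding GI_def by blast

lemma GI_lin: "T \<in> GI I \<Longrightarrow> lin T" by (erule GI_cases) (auto simp: lin_Lm lin_ad)

lemma GI_UNIV: "T \<in> GI I \<Longrightarrow> T \<in> GI UNIV" unfolding GI_def by blast

lemma ad_GI: assumes "length xs = n - 1" shows "ad xs \<in> GI UNIV"
proof -
  have "0 < n - 1" using n2 by simp
  then show ?thesis using assms unfolding GI_def by blast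
qed

lemma TW_UNIV: "T \<in> TW k \<Longrightarrow> T \<in> GI UNIV" unfolding TW_def using ad_GI by blast
lemma Kk_UNIV: "T \<in> Kk k \<Longrightarrow> T \<in> GI UNIV" unfolding Kk_def using TW_UNIV GI_UNIV by blast
lemma AA_UNIV: "T \<in> AA j \<Longrightarrow> T \<in> GI UNIV" unfolding AA_def using Kk_UNIV GI_UNIV by (auto split: if_splits)
lemma AA_lin: "T \<in> AA j \<Longrightarrow> lin T" using AA_UNIV GI_lin by blast
lemma AA0: "AA 0 = GI UNIV" by (simp add: AA_def)

lemma X1: assumes I: "pn_ideal scale n br I" and xs: "length xs = n - 1" and good: "\<And>c. br (xs @ [c]) \<in> I"
    and x: "x \<in> GI UNIV"
  shows "comm (ad xs) x \<in> ospan (GI I)"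
  using x
proof (rule GI_cases)
  fix b assume "x = Lm b"
  then have "comm (ad xs) x = Lm (br (xs @ [b]))" using CAL[OF xs] by simp
  moreover have "Lm (br (xs @ [b])) \<in> GI I" using good unfolding GI_def by blast
  ultimately show ?thesis by (simp add: ospan.ob)
next
  fix ys i assume ys: "x = ad ys" "length ys = n - 1"
  have "comm (ad xs) x = (\<lambda>v. \<Sum>i<n - 1. ad (ys[i := br (xs @ [ys ! i])]) v)" using CAA[OF xs ys(2)] ys(1) by simp
  moreover have "(\<lambda>v. \<Sum>i<n - 1. ad (ys[i := br (xs @ [ys ! i])]) v) \<in> ospan (GI I)"
  proof (rule ospan_sum)
    fix i assume i: "i \<in> {..<n - 1}"
    have "length (ys[i := br (xs @ [ys ! i])]) = n - 1" using ys by simp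
    moreover have "ys[i := br (xs @ [ys ! i])] ! i \<in> I" using i ys good by simp
    ultimately have "ad (ys[i := br (xs @ [ys ! i])]) \<in> GI I" using i unfolding GI_def by blast
    then show "ad (ys[i := br (xs @ [ys ! i])]) \<in> ospan (GI I)" by (rule ospan.ob)
  qed simp
  ultimately show ?thesis by simp
qed

lemma X2: assumes I: "pn_ideal scale n br I" and a: "a \<in> I" and x: "x \<in> GI UNIV"
  shows "comm (Lm a) x \<in> ospan (GI I)"
  using x
proof (rule GI_cases)
  fix b assume "x = Lm b"
  then show ?thesis by (simp add: CLL ospan.oz)
next
  fix ys i assume ys: "x = ad ys" "length ys = n - 1"
  have "br (ys @ [a]) \<in> I"
    by (rule anypos[OF I, of _ "n - 1"]) (use ys(2) a n2 in \<open>auto simp: nth_append\<close>)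
  then have "Lm (br (ys @ [a])) \<in> ospan (GI I)" unfolding GI_def by (intro ospan.ob) blast
  then have "(\<lambda>v. (-1) *s Lm (br (ys @ [a])) v) \<in> ospan (GI I)" by (rule ospan.os)
  then show ?thesis using CLA[OF ys(2)] ys(1) by simp
qed

lemma GIgen: assumes I: "pn_ideal scale n br I" and T: "T \<in> GI I" and x: "x \<in> GI UNIV"
  shows "comm T x \<in> ospan (GI I)"
  using T
proof (rule GI_cases)
  fix a assume "T = Lm a" "a \<in> I" then show ?thesis using X2[OF I _ x] by simp
next
  fix xs i assume xs: "T = ad xs" "length xs = n - 1" "i < n - 1" "xs ! i \<in> I"
  have "br (xs @ [c]) \<in> I" for c
    by (rule anypos[OF I, of _ i]) (use xs n2 in \<open>auto simp: nth_append\<close>)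
  then show ?thesis using X1[OF I xs(2) _ x] xs(1) by simp
qed

lemma TWgen: assumes T: "T \<in> TW k" and x: "x \<in> GI UNIV"
  shows "comm T x \<in> ospan (GI (D (Suc k)))"
proof -
  obtain xs i j where xs: "T = ad xs" "length xs = n - 1" "i < n - 1" "j < n - 1" "i \<noteq> j"
    "xs ! i \<in> D k" "xs ! j \<in> D k" using T unfolding TW_def by blast
  have "br (xs @ [c]) \<in> D (Suc k)" for c
    by (rule twopos[of _ i j]) (use xs n2 in \<open>auto simp: nth_append\<close>)
  then show ?thesis using X1[OF D_ideal xs(2) _ x] xs(1) by simp
qed

lemma Kgen: assumes T: "T \<in> Kk k" and x: "x \<in> GI UNIV"
  shows "comm T x \<in> ospan (GI (D (Suc k)))"
  using T unfolding Kk_def using GIgen[OF D_ideal _ x] TWgen[OF _ x] by blast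

lemma C3: assumes a: "a \<in> GI (D k)" and b: "b \<in> GI (D k)"
  shows "comm a b \<in> ospan (Kk k)"
proof -
  have GK: "T \<in> GI (D (Suc k)) \<Longrightarrow> T \<in> ospan (Kk k)" for T unfolding Kk_def by (rule ospan.ob) blast
  show ?thesis
  using a
  proof (rule GI_cases)
    fix a' assume a': "a = Lm a'" "a' \<in> D k"
    show ?thesis using b
    proof (rule GI_cases)
      fix b' assume "b = Lm b'" then show ?thesis using a' by (simp add: CLL ospan.oz)
    next
      fix ys j assume ys: "b = ad ys" "length ys = n - 1" "j < n - 1" "ys ! j \<in> D k"
      have "br (ys @ [a']) \<in> D (Suc k)"
        by (rule twopos[of _ j "n - 1"]) (use ys a' n2 in \<open>auto simp: nth_append\<close>)
      then have "Lm (br (ys @ [a'])) \<in> ospan (Kk k)" using GK unfolding GI_def by blast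
      then have "(\<lambda>v. (-1) *s Lm (br (ys @ [a'])) v) \<in> ospan (Kk k)" by (rule ospan.os)
      then show ?thesis using CLA[OF ys(2)] ys(1) a'(1) by simp
    qed
  next
    fix xs i assume xs: "a = ad xs" "length xs = n - 1" "i < n - 1" "xs ! i \<in> D k"
    show ?thesis using b
    proof (rule GI_cases)
      fix b' assume b': "b = Lm b'" "b' \<in> D k"
      have "br (xs @ [b']) \<in> D (Suc k)"
        by (rule twopos[of _ i "n - 1"]) (use xs b' n2 in \<open>auto simp: nth_append\<close>)
      then have "Lm (br (xs @ [b'])) \<in> ospan (Kk k)" using GK unfolding GI_def by blast
      then show ?thesis using CAL[OF xs(2)] xs(1) b'(1) by simp
    next
      fix ys j assume ys: "b = ad ys" "length ys = n - 1" "j < n - 1" "ys ! j \<in> D k"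
      have "(\<lambda>v. \<Sum>l<n - 1. ad (ys[l := br (xs @ [ys ! l])]) v) \<in> ospan (Kk k)"
      proof (rule ospan_sum)
        fix l assume l: "l \<in> {..<n - 1}"
        have len: "length (ys[l := br (xs @ [ys ! l])]) = n - 1" using ys by simp
        show "ad (ys[l := br (xs @ [ys ! l])]) \<in> ospan (Kk k)"
        proof (cases "l = j")
          case True
          have "br (xs @ [ys ! l]) \<in> D (Suc k)"
            by (rule twopos[of _ i "n - 1"]) (use xs ys True n2 in \<open>auto simp: nth_append\<close>)
          then have "ys[l := br (xs @ [ys ! l])] ! l \<in> D (Suc k)" using l ys by simp
          then have "ad (ys[l := br (xs @ [ys ! l])]) \<in> GI (D (Suc k))" using len l unfolding GI_def by blast
          then show ?thesis by (rule GK)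
        next
          case False
          have "br (xs @ [ys ! l]) \<in> D k"
            by (rule anypos[OF D_ideal, of _ i]) (use xs n2 in \<open>auto simp: nth_append\<close>)
          then have e1: "ys[l := br (xs @ [ys ! l])] ! l \<in> D k" using l ys by simp
          have e2: "ys[l := br (xs @ [ys ! l])] ! j \<in> D k" using ys False by simp
          have "ad (ys[l := br (xs @ [ys ! l])]) \<in> TW k"
            unfolding TW_def using len l ys(3) False e1 e2 by blast
          then show ?thesis unfolding Kk_def by (rule ospan.ob[OF UnI2])
        qed
      qed simp
      then show ?thesis using CAA[OF xs(2) ys(2)] xs(1) ys(1) by simp
    qed
  qed
qed

end


context PN begin

lemma S_ideal: assumes T: "T \<in> ospan (AA j)" and x: "x \<in> ospan (GI UNIV)"
  shows "comm T x \<in> ospan (AA j)"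
proof (rule comm_lift[OF AA_lin GI_lin _ T x])
  fix a y assume a: "a \<in> AA j" and y: "y \<in> GI UNIV"
  show "comm a y \<in> ospan (AA j)"
  proof (cases "even j")
    case True
    then have "a \<in> GI (D (j div 2))" using a by (simp add: AA_def)
    then have "comm a y \<in> ospan (GI (D (j div 2)))" using GIgen[OF D_ideal _ y] by blast
    then show ?thesis using True by (simp add: AA_def)
  next
    case False
    then have "a \<in> Kk (j div 2)" using a by (simp add: AA_def)
    then have "comm a y \<in> ospan (GI (D (Suc (j div 2))))" using Kgen[OF _ y] by blast
    then have "comm a y \<in> ospan (Kk (j div 2))" by (rule ospan_mono[rotated]) (auto simp: Kk_def)
    then show ?thesis using False by (simp add: AA_def)
  qed
qed

lemma S_derived: assumes a: "a \<in> ospan (AA j)" and b: "b \<in> ospan (AA j)"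
  shows "comm a b \<in> ospan (AA (Suc j))"
proof (rule comm_lift[OF AA_lin AA_lin _ a b])
  fix a b assume a: "a \<in> AA j" and b: "b \<in> AA j"
  show "comm a b \<in> ospan (AA (Suc j))"
  proof (cases "even j")
    case True
    then have "a \<in> GI (D (j div 2))" "b \<in> GI (D (j div 2))" using a b by (simp_all add: AA_def)
    then have "comm a b \<in> ospan (Kk (j div 2))" by (rule C3)
    moreover have "AA (Suc j) = Kk (j div 2)" using True by (simp add: AA_def)
    ultimately show ?thesis by simp
  next
    case False
    then have "a \<in> Kk (j div 2)" using a by (simp add: AA_def)
    then have "comm a b \<in> ospan (GI (D (Suc (j div 2))))" using Kgen AA_UNIV[OF b] by blast
    moreover have "AA (Suc j) = GI (D (Suc (j div 2)))"
    proof -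
      from False obtain k where "j = 2 * k + 1" by (auto elim: oddE)
      then show ?thesis by (simp add: AA_def)
    qed
    ultimately show ?thesis by simp
  qed
qed

lemma S_zero: assumes s0: "D s0 = {0}" and T: "T \<in> ospan (AA (2 * s0))" shows "T v = 0"
proof (rule ospan_zero[OF _ T])
  fix a v assume "a \<in> AA (2 * s0)"
  then have "a \<in> GI {0}" using s0 by (simp add: AA_def)
  then show "a v = 0"
  proof (rule GI_cases)
    fix c assume "a = Lm c" "c \<in> {0}" then show ?thesis by (simp add: Lm_def)
  next
    fix xs i assume xs: "a = ad xs" "length xs = n - 1" "i < n - 1" "xs ! i \<in> {0}"
    have "br (xs @ [v]) = 0" by (rule br_zero[of _ i]) (use xs n2 in \<open>auto simp: nth_append\<close>)
    then show ?thesis using xs(1) by (simp add: ad_def)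
  qed
qed

lemma step_ideal: assumes J: "pn_ideal scale n br J" "J \<noteq> UNIV" and s0: "D s0 = {0}"
  shows "\<exists>v. v \<notin> J \<and> pn_ideal scale n br (span (insert v J))"
proof -
  have sJ: "subspace J" using J unfolding pn_ideal_def by blast
  have Jm: "p * u \<in> J" if "u \<in> J" for p u using J that unfolding pn_ideal_def by blast
  have gpres: "x u \<in> J" if "x \<in> GI UNIV" "u \<in> J" for x u
    using that(1)
  proof (rule GI_cases)
    fix a assume "x = Lm a" then show ?thesis using Jm[OF that(2)] by (simp add: Lm_def)
  next
    fix xs i assume xs: "x = ad xs" "length xs = n - 1"
    have "br (xs @ [u]) \<in> J" by (rule anypos[OF J(1), of _ "n - 1"]) (use xs that(2) n2 in \<open>auto simp: nth_append\<close>)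
    then show ?thesis using xs(1) by (simp add: ad_def)
  qed
  have "\<exists>v. v \<notin> J \<and> (\<forall>T\<in>ospan (AA 0). \<exists>c. T v - c *s v \<in> J)"
  proof (rule lie_main[where S="\<lambda>j. ospan (AA j)" and g="ospan (GI UNIV)" and s="2 * s0" and U=J])
    show "subspace J" by (rule sJ)
    show "J \<noteq> UNIV" by (rule J(2))
    show "lin x" if "x \<in> ospan (GI UNIV)" for x using ospan_lin[OF GI_lin that] .
    show "x u \<in> J" if "x \<in> ospan (GI UNIV)" "u \<in> J" for x u using ospan_pres[where A="GI UNIV", OF sJ _ that] gpres by blast
    show "ospan (AA j) \<subseteq> ospan (GI UNIV)" for j using ospan_mono[of "AA j" "GI UNIV"] AA_UNIV by blast
    show "comm T x \<in> ospan (AA j)" if "T \<in> ospan (AA j)" "x \<in> ospan (GI UNIV)" for j T x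
      using S_ideal that by blast
    show "comm a b \<in> ospan (AA (Suc j))" if "a \<in> ospan (AA j)" "b \<in> ospan (AA j)" for j a b
      using S_derived that by blast
    show "T v = 0" if "T \<in> ospan (AA (2 * s0))" for T v using S_zero[OF s0 that] .
  qed
  then obtain v where v: "v \<notin> J" "\<And>T. T \<in> ospan (GI UNIV) \<Longrightarrow> \<exists>c. T v - c *s v \<in> J"
    unfolding AA0 by blast
  define J' where "J' = span (insert v J)"
  have sJ': "subspace J'" unfolding J'_def by simp
  have JJ': "J \<subseteq> J'" unfolding J'_def using span_superset by blast
  have vJ': "v \<in> J'" unfolding J'_def using span_superset by blast
  have gv: "T v \<in> J'" if T: "T \<in> GI UNIV" for T
  proof -
    obtain c where c: "T v - c *s v \<in> J" using v(2)[OF ospan.ob[OF T]] by blast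
    have "T v = (T v - c *s v) + c *s v" by simp
    moreover have "c *s v \<in> J'" using vJ' sJ' subspace_scale by blast
    ultimately show ?thesis using c JJ' sJ' subspace_add by (metis subsetD)
  qed
  have "pn_ideal scale n br J'" unfolding pn_ideal_def
  proof (intro conjI allI impI)
    show "subspace J'" by (rule sJ')
  next
    fix p x :: 'v assume x: "x \<in> J'"
    have "Lm p g \<in> J'" if "g \<in> insert v J" for g
    proof (cases "g = v")
      case True
      have "Lm p \<in> GI UNIV" unfolding GI_def by blast
      then show ?thesis using gv True by blast
    next
      case False then have "g \<in> J" using that by blast
      then show ?thesis using Jm JJ' by (auto simp: Lm_def)
    qed
    then have "Lm p x \<in> J'" using lin_sub_into[OF lin_Lm sJ'] x unfolding J'_def by blast
    then show "p * x \<in> J'" by (simp add: Lm_def)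
  next
    fix x :: 'v and xs :: "'v list" assume x: "x \<in> J'" and xs: "length xs = n - 1"
    obtain bs l where bl: "xs = bs @ [l]" "length bs = n - 2" using split_last[OF xs] .
    have lw: "length (l # bs) = n - 1" using bl n2 by simp
    have "br (g # xs) \<in> J'" if "g \<in> insert v J" for g
    proof (cases "g = v")
      case True
      have "br (g # xs) = - ad (l # bs) g" using brFL[OF bl(2), of g l] bl(1) by (simp add: ad_def)
      moreover have "ad (l # bs) g \<in> J'" using gv[OF ad_GI[OF lw]] True by simp
      ultimately show ?thesis using sJ' subspace_neg by simp
    next
      case False then have "g \<in> J" using that by blast
      then have "br (g # xs) \<in> J" using J(1) xs unfolding pn_ideal_def by blast
      then show ?thesis using JJ' by blast
    qed
    then show "br (x # xs) \<in> J'" using lin_sub_into[OF lin_first[OF xs] sJ'] x unfolding J'_def by blast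
  qed
  then show ?thesis using v(1) unfolding J'_def by blast
qed

lemma ideal0: "pn_ideal scale n br {0}"
  unfolding pn_ideal_def
proof (intro conjI allI impI)
  show "subspace {0}" by simp
  show "p * x \<in> {0}" if "x \<in> {0}" for p x :: 'v using that by simp
  show "br (x # xs) \<in> {0}" if "x \<in> {0}" "length xs = n - 1" for x :: 'v and xs
    using that lin_0[OF lin_first[OF that(2)]] by simp
qed

lemma chain: assumes s0: "D s0 = {0}"
  shows "\<exists>P :: nat \<Rightarrow> 'v set. P 0 = {0} \<and> P (dim UNIV) = UNIV \<and>
           (\<forall>i<dim UNIV. P i \<subset> P (Suc i)) \<and>
           (\<forall>i\<le>dim UNIV. pn_ideal scale n br (P i) \<and> dim (P i) = i)"
proof -
  define m where "m = dim (UNIV :: 'v set)"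
  have ex: "\<exists>J'. pn_ideal scale n br J' \<and> J \<subseteq> J' \<and> dim J' = Suc (dim J)"
    if J: "pn_ideal scale n br J" "J \<noteq> UNIV" for J
  proof -
    obtain v where v: "v \<notin> J" "pn_ideal scale n br (span (insert v J))" using step_ideal[OF J s0] by blast
    have sJ: "subspace J" using J unfolding pn_ideal_def by blast
    have sp: "span J = J" using sJ local.span_eq_iff by blast
    have "v \<notin> span J" unfolding sp by (rule v(1))
    then have "dim (span (insert v J)) = Suc (dim J)" by (simp add: dim_insert)
    moreover have "J \<subseteq> span (insert v J)" using span_superset by blast
    ultimately show ?thesis using v(2) by blast
  qed
  define nxt where "nxt J = (SOME J'. pn_ideal scale n br J' \<and> J \<subseteq> J' \<and> dim J' = Suc (dim J))" for J
  define P where "P i = (nxt ^^ i) {0}" for i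
  have P0: "P 0 = {0}" by (simp add: P_def)
  have PS: "P (Suc i) = nxt (P i)" for i by (simp add: P_def)
  have nx: "pn_ideal scale n br (nxt J) \<and> J \<subseteq> nxt J \<and> dim (nxt J) = Suc (dim J)"
    if "pn_ideal scale n br J" "J \<noteq> UNIV" for J
    unfolding nxt_def using someI_ex[OF ex[OF that]] .
  have Pi: "pn_ideal scale n br (P i) \<and> dim (P i) = i" if "i \<le> m" for i
    using that
  proof (induction i)
    case 0 then show ?case using ideal0 by (simp add: P0)
  next
    case (Suc i)
    then have IH: "pn_ideal scale n br (P i)" "dim (P i) = i" "i < m" by auto
    have "P i \<noteq> UNIV" using IH(2,3) m_def by auto
    then show ?case using nx[OF IH(1)] IH(2) PS by simp
  qed
  have Psub: "P i \<subseteq> P (Suc i)" if "i < m" for i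
  proof -
    have "pn_ideal scale n br (P i)" "dim (P i) = i" using Pi that by auto
    moreover then have "P i \<noteq> UNIV" using that m_def by auto
    ultimately show ?thesis using nx PS by simp
  qed
  have Pm: "P m = UNIV"
  proof (rule subspace_dim_equal)
    show "subspace (P m)" using Pi[of m] unfolding pn_ideal_def by simp
    show "subspace UNIV" by simp
    show "P m \<subseteq> UNIV" by simp
    show "dim UNIV \<le> dim (P m)" using Pi[of m] m_def by simp
  qed
  have "\<forall>i<m. P i \<subset> P (Suc i)"
  proof (intro allI impI)
    fix i assume i: "i < m"
    have "dim (P i) = i" "dim (P (Suc i)) = Suc i" using Pi i by auto
    then have "P i \<noteq> P (Suc i)" by auto
    then show "P i \<subset> P (Suc i)" using Psub[OF i] by blast
  qed
  then show ?thesis using P0 Pm Pi unfolding m_def by blast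
qed

end

theorem corollary5p8:
  fixes scale :: "'k::field_char_0 \<Rightarrow> 'v::comm_ring \<Rightarrow> 'v"
    and n m :: nat and br :: "'v list \<Rightarrow> 'v"
  assumes "alg_closed TYPE('k)"
    and "poisson_nlie scale n br"
    and "\<exists>B. finite B \<and> module.span scale B = UNIV"
    and "vector_space.dim scale UNIV = m"
    and "pn_solvable scale n br"
  shows "\<exists>P :: nat \<Rightarrow> 'v set. P 0 = {0} \<and> P m = UNIV \<and>
           (\<forall>i<m. P i \<subset> P (Suc i)) \<and>
           (\<forall>i\<le>m. pn_ideal scale n br (P i) \<and> vector_space.dim scale (P i) = i)"
proof -
  interpret vs: vector_space scale using assms(2) unfolding poisson_nlie_def by blast
  obtain B where B: "finite B" "vs.span B = UNIV" using assms(3) by blast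
  obtain Bs where Bs: "vs.independent Bs" "UNIV \<subseteq> vs.span Bs"
    using vs.basis_exists[of UNIV] by blast
  have fin: "finite Bs" using vs.independent_span_bound[OF B(1) Bs(1)] B(2) by auto
  interpret PN scale Bs n br
  proof unfold_locales
    show "finite Bs" by (rule fin)
    show "vs.independent Bs" by (rule Bs(1))
    show "vs.span Bs = UNIV" using Bs(2) by blast
    show "alg_closed TYPE('k)" by (rule assms(1))
    show "poisson_nlie scale n br" by (rule assms(2))
  qed
  obtain s0 where "D s0 = {0}" using assms(5) unfolding pn_solvable_def by blast
  from chain[OF this] show ?thesis using assms(4) by simp
qed

end
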